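(* For every $n\ge 3$, the Q-graph $\mathcal Q(C_n)$ of the cycle $C_n$ on $n$ vertices does not have Laplacian perfect pair state transfer between any two distinct pair states.
   Context: The Q-graph $\mathcal Q(G)$ is obtained from $G$ by inserting a new vertex into each edge of $G$ and joining by an edge each pair of new vertices lying on adjacent edges of $G$. For a simple graph $H$ with Laplacian $L_H=D_H-A_H$ and characteristic vectors $\mathbf e_u$ of vertices, a pair state is $\mathbf e_a-\mathbf e_b$ for distinct vertices $a,b$. $H$ has Laplacian perfect pair state transfer between distinct pair states $\mathbf e_a-\mathbf e_b$ and $\mathbf e_c-\mathbf e_d$ if there exist $\tau\in\mathbb R$ and $\chi\in\mathbb C$ with $|\chi|=1$ such that $\exp(-\mathrm i\tau L_H)(\mathbf e_a-\mathbf e_b)=\chi(\mathbf e_c-\mathbf e_d)$. *)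

theory Defs
  imports Complex_Main
begin

(* A simple graph is given by a finite vertex set V and a symmetric irreflexive
   adjacency relation A (only its restriction to V matters). *)

definition graph_edges :: "'a set \<Rightarrow> ('a \<Rightarrow> 'a \<Rightarrow> bool) \<Rightarrow> 'a set set" where
  "graph_edges V A = {{u, v} | u v. u \<in> V \<and> v \<in> V \<and> A u v}"

(* Q-graph: original vertices Inl u, one new vertex Inr e per edge e;
   u ~ e iff u lies on e; e ~ f iff e, f are distinct adjacent edges. *)
definition Q_verts :: "'a set \<Rightarrow> ('a \<Rightarrow> 'a \<Rightarrow> bool) \<Rightarrow> ('a + 'a set) set" where
  "Q_verts V A = Inl ` V \<union> Inr ` graph_edges V A"

fun Q_adj :: "('a + 'a set) \<Rightarrow> ('a + 'a set) \<Rightarrow> bool" where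
  "Q_adj (Inl u) (Inr e) = (u \<in> e)"
| "Q_adj (Inr e) (Inl u) = (u \<in> e)"
| "Q_adj (Inr e) (Inr f) = (e \<noteq> f \<and> e \<inter> f \<noteq> {})"
| "Q_adj (Inl u) (Inl v) = False"

definition cycle_adj :: "nat \<Rightarrow> nat \<Rightarrow> nat \<Rightarrow> bool" where
  "cycle_adj n i j = (j = (i + 1) mod n \<or> i = (j + 1) mod n)"

definition laplacian :: "'v set \<Rightarrow> ('v \<Rightarrow> 'v \<Rightarrow> bool) \<Rightarrow> 'v \<Rightarrow> 'v \<Rightarrow> complex" where
  "laplacian V A x y =
     (if x = y then of_nat (card {z \<in> V. A x z}) else 0) - (if A x y then 1 else 0)"

definition mat_vec :: "'v set \<Rightarrow> ('v \<Rightarrow> 'v \<Rightarrow> complex) \<Rightarrow> ('v \<Rightarrow> complex) \<Rightarrow> 'v \<Rightarrow> complex" where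
  "mat_vec V M f x = (\<Sum>y\<in>V. M x y * f y)"

definition exp_evolve :: "'v set \<Rightarrow> ('v \<Rightarrow> 'v \<Rightarrow> complex) \<Rightarrow> real \<Rightarrow> ('v \<Rightarrow> complex) \<Rightarrow> 'v \<Rightarrow> complex" where
  "exp_evolve V M t f x =
     (\<Sum>k. ((- \<i> * of_real t) ^ k / fact k) * ((mat_vec V M ^^ k) f) x)"

definition char_vec :: "'v \<Rightarrow> 'v \<Rightarrow> complex" where
  "char_vec a = (\<lambda>x. if x = a then 1 else 0)"

definition pair_state :: "'v \<Rightarrow> 'v \<Rightarrow> 'v \<Rightarrow> complex" where
  "pair_state a b = (\<lambda>x. char_vec a x - char_vec b x)"

definition lap_pair_PST :: "'v set \<Rightarrow> ('v \<Rightarrow> 'v \<Rightarrow> bool) \<Rightarrow> 'v \<Rightarrow> 'v \<Rightarrow> 'v \<Rightarrow> 'v \<Rightarrow> bool" where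
  "lap_pair_PST V A a b c d =
     (\<exists>\<tau>::real. \<exists>\<chi>::complex. cmod \<chi> = 1 \<and>
        (\<forall>x\<in>V. exp_evolve V (laplacian V A) \<tau> (pair_state a b) x = \<chi> * pair_state c d x))"

end

theory Submission
  imports Defs
begin

lemma mat_vec_pow_dot:
  assumes fin: "finite V" and sym: "\<And>x y. x \<in> V \<Longrightarrow> y \<in> V \<Longrightarrow> M x y = M y x"
    and eig: "\<And>x. x \<in> V \<Longrightarrow> mat_vec V M u x = \<theta> * u x"
  shows "(\<Sum>x\<in>V. u x * (mat_vec V M ^^ k) f x) = \<theta> ^ k * (\<Sum>x\<in>V. u x * f x)"
proof (induction k)
  case 0 then show ?case by simp
next
  case (Suc k)
  define g where "g = (mat_vec V M ^^ k) f"
  have "(\<Sum>x\<in>V. u x * (mat_vec V M ^^ Suc k) f x) = (\<Sum>x\<in>V. u x * (\<Sum>y\<in>V. M x y * g y))"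
    by (simp add: g_def mat_vec_def)
  also have "\<dots> = (\<Sum>y\<in>V. (\<Sum>x\<in>V. M y x * u x) * g y)"
    unfolding sum_distrib_left sum_distrib_right
    by (subst sum.swap) (auto intro!: sum.cong simp: sym mult_ac)
  also have "\<dots> = (\<Sum>y\<in>V. \<theta> * (u y * g y))"
    using eig by (simp add: mat_vec_def mult_ac)
  also have "\<dots> = \<theta> * (\<Sum>x\<in>V. u x * g x)" by (simp add: sum_distrib_left)
  finally show ?case using Suc by (simp add: g_def)
qed

lemma pow_bound:
  fixes M :: "'v \<Rightarrow> 'v \<Rightarrow> complex"
  assumes fin: "finite V"
  defines "B \<equiv> (\<Sum>x\<in>V. \<Sum>y\<in>V. cmod (M x y))"
  shows "(\<Sum>x\<in>V. cmod ((mat_vec V M ^^ k) f x)) \<le> B ^ k * (\<Sum>x\<in>V. cmod (f x))"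
proof (induction k)
  case 0 then show ?case by simp
next
  case (Suc k)
  define g where "g = (mat_vec V M ^^ k) f"
  define N where "N = (\<Sum>x\<in>V. cmod (g x))"
  have gy: "cmod (g y) \<le> N" if "y \<in> V" for y
    unfolding N_def using fin that by (intro member_le_sum) auto
  have "(\<Sum>x\<in>V. cmod ((mat_vec V M ^^ Suc k) f x)) = (\<Sum>x\<in>V. cmod (\<Sum>y\<in>V. M x y * g y))"
    by (simp add: g_def mat_vec_def)
  also have "\<dots> \<le> (\<Sum>x\<in>V. \<Sum>y\<in>V. cmod (M x y) * N)"
  proof (rule sum_mono)
    fix x assume "x \<in> V"
    have "cmod (\<Sum>y\<in>V. M x y * g y) \<le> (\<Sum>y\<in>V. cmod (M x y * g y))" by (rule norm_sum)
    also have "\<dots> \<le> (\<Sum>y\<in>V. cmod (M x y) * N)"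
      by (rule sum_mono) (auto simp: norm_mult intro: mult_left_mono gy)
    finally show "cmod (\<Sum>y\<in>V. M x y * g y) \<le> (\<Sum>y\<in>V. cmod (M x y) * N)" .
  qed
  also have "\<dots> = B * N" by (simp add: B_def sum_distrib_right)
  also have "\<dots> \<le> B * (B ^ k * (\<Sum>x\<in>V. cmod (f x)))"
    using Suc by (auto simp: N_def g_def B_def intro!: mult_left_mono sum_nonneg)
  finally show ?case by simp
qed

lemma evolve_summable:
  assumes fin: "finite V" and x: "x \<in> V"
  shows "summable (\<lambda>k. ((- \<i> * of_real t) ^ k / fact k) * ((mat_vec V M ^^ k) f) x)"
proof -
  define B where "B = (\<Sum>x\<in>V. \<Sum>y\<in>V. cmod (M x y))"
  define N0 where "N0 = (\<Sum>x\<in>V. cmod (f x))"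
  have b: "cmod ((mat_vec V M ^^ k) f x) \<le> B ^ k * N0" for k
  proof -
    have "cmod ((mat_vec V M ^^ k) f x) \<le> (\<Sum>x\<in>V. cmod ((mat_vec V M ^^ k) f x))"
      using fin x by (intro member_le_sum) auto
    then show ?thesis using pow_bound[OF fin, where M=M and k=k and f=f] by (simp add: B_def N0_def)
  qed
  have s: "summable (\<lambda>k. (\<bar>t\<bar> * B) ^ k / fact k * N0)"
  proof (rule summable_mult2)
    show "summable (\<lambda>k. (\<bar>t\<bar> * B) ^ k / fact k)"
      using summable_exp_generic[of "\<bar>t\<bar> * B"] by (simp add: divide_inverse mult.commute)
  qed
  show ?thesis
  proof (rule summable_comparison_test'[OF s])
    fix k :: nat assume "k \<ge> 0"
    have "norm ((- \<i> * of_real t) ^ k / fact k * (mat_vec V M ^^ k) f x)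
          = \<bar>t\<bar> ^ k / fact k * cmod ((mat_vec V M ^^ k) f x)"
      by (simp add: norm_mult norm_divide norm_power)
    also have "\<dots> \<le> \<bar>t\<bar> ^ k / fact k * (B ^ k * N0)"
      by (intro mult_left_mono b) auto
    also have "\<dots> = (\<bar>t\<bar> * B) ^ k / fact k * N0" by (simp add: power_mult_distrib)
    finally show "norm ((- \<i> * of_real t) ^ k / fact k * (mat_vec V M ^^ k) f x)
          \<le> (\<bar>t\<bar> * B) ^ k / fact k * N0" .
  qed
qed

lemma evolve_dot:
  assumes fin: "finite V" and sym: "\<And>x y. x \<in> V \<Longrightarrow> y \<in> V \<Longrightarrow> M x y = M y x"
    and eig: "\<And>x. x \<in> V \<Longrightarrow> mat_vec V M u x = \<theta> * u x"
  shows "(\<Sum>x\<in>V. u x * exp_evolve V M t f x) = exp (- \<i> * of_real t * \<theta>) * (\<Sum>x\<in>V. u x * f x)"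
proof -
  let ?T = "\<lambda>x k. ((- \<i> * of_real t) ^ k / fact k) * ((mat_vec V M ^^ k) f) x"
  have "(\<Sum>x\<in>V. u x * exp_evolve V M t f x) = (\<Sum>x\<in>V. \<Sum>k. u x * ?T x k)"
    unfolding exp_evolve_def
    by (intro sum.cong refl suminf_mult[symmetric] evolve_summable[OF fin])
  also have "\<dots> = (\<Sum>k. \<Sum>x\<in>V. u x * ?T x k)"
    by (rule suminf_sum[symmetric]) (intro summable_mult evolve_summable[OF fin])
  also have "\<dots> = (\<Sum>k. (- \<i> * of_real t * \<theta>) ^ k / fact k * (\<Sum>x\<in>V. u x * f x))"
  proof -
    have "(\<Sum>x\<in>V. u x * ?T x k) = (- \<i> * of_real t * \<theta>) ^ k / fact k * (\<Sum>x\<in>V. u x * f x)" for k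
    proof -
      have "(\<Sum>x\<in>V. u x * ?T x k) = ((- \<i> * of_real t) ^ k / fact k) * (\<Sum>x\<in>V. u x * (mat_vec V M ^^ k) f x)"
        by (simp add: sum_distrib_left mult_ac)
      also have "\<dots> = ((- \<i> * of_real t) ^ k / fact k) * (\<theta> ^ k * (\<Sum>x\<in>V. u x * f x))"
        by (simp add: mat_vec_pow_dot[OF fin sym eig])
      moreover have "(- \<i> * of_real t * \<theta>) ^ k = (- \<i> * of_real t) ^ k * \<theta> ^ k"
        by (metis minus_mult_left power_mult_distrib)
      ultimately show ?thesis by simp
    qed
    then show ?thesis by simp
  qed
  also have "\<dots> = exp (- \<i> * of_real t * \<theta>) * (\<Sum>x\<in>V. u x * f x)"
  proof -
    have "(\<lambda>k. (- \<i> * of_real t * \<theta>) ^ k / fact k) sums exp (- \<i> * of_real t * \<theta>)"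
      using exp_converges[of "- \<i> * of_real t * \<theta>"] by (simp add: scaleR_conv_of_real divide_inverse mult_ac)
    from sums_mult2[OF this, of "\<Sum>x\<in>V. u x * f x"] show ?thesis by (rule sums_unique[symmetric])
  qed
  finally show ?thesis .
qed

lemma evolve_zero:
  "exp_evolve V M 0 f x = f x"
proof -
  have "exp_evolve V M 0 f x = (\<Sum>k\<in>{0}. ((- \<i> * of_real 0) ^ k / fact k) * ((mat_vec V M ^^ k) f) x)"
    unfolding exp_evolve_def by (rule suminf_finite) auto
  then show ?thesis by simp
qed

lemma real_cnj: "Im z = 0 \<Longrightarrow> cnj z = z"
  by (simp add: complex_eq_iff)

lemma eig_cnj:
  assumes realM: "\<And>x y. x \<in> V \<Longrightarrow> y \<in> V \<Longrightarrow> Im (M x y) = 0"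
    and eig: "\<And>x. x \<in> V \<Longrightarrow> mat_vec V M u x = of_real \<theta> * u x"
    and x: "x \<in> V"
  shows "mat_vec V M (\<lambda>y. cnj (u y)) x = of_real \<theta> * cnj (u x)"
proof -
  have "mat_vec V M (\<lambda>y. cnj (u y)) x = cnj (mat_vec V M u x)"
    unfolding mat_vec_def using realM x by (simp add: real_cnj)
  also have "\<dots> = of_real \<theta> * cnj (u x)" using eig[OF x] by simp
  finally show ?thesis .
qed

lemma pst_phase:
  fixes V :: "'v set" and M :: "'v \<Rightarrow> 'v \<Rightarrow> complex" and \<theta> \<tau> :: real
  assumes fin: "finite V" and sym: "\<And>x y. x \<in> V \<Longrightarrow> y \<in> V \<Longrightarrow> M x y = M y x"
    and realM: "\<And>x y. x \<in> V \<Longrightarrow> y \<in> V \<Longrightarrow> Im (M x y) = 0"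
    and eig: "\<And>x. x \<in> V \<Longrightarrow> mat_vec V M u x = of_real \<theta> * u x"
    and vreal: "\<And>x. Im (v x) = 0" and wreal: "\<And>x. Im (w x) = 0"
    and chi: "cmod \<chi> = 1"
    and pst: "\<And>x. x \<in> V \<Longrightarrow> exp_evolve V M \<tau> v x = \<chi> * w x"
  shows "(\<Sum>x\<in>V. u x * w x) = cis (- (\<tau> * \<theta>)) / \<chi> * (\<Sum>x\<in>V. u x * v x)"
    and "(\<Sum>x\<in>V. u x * v x) \<noteq> 0 \<Longrightarrow> cis (- (\<tau> * \<theta>)) ^ 2 = \<chi> ^ 2"
proof -
  define l where "l = cis (- (\<tau> * \<theta>))"
  have l_exp: "exp (- \<i> * of_real \<tau> * of_real \<theta>) = l"
    by (simp add: l_def cis_conv_exp mult_ac)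
  have chi0: "\<chi> \<noteq> 0" using chi by auto
  have gen: "\<chi> * (\<Sum>x\<in>V. u' x * w x) = l * (\<Sum>x\<in>V. u' x * v x)"
    if eig': "\<And>x. x \<in> V \<Longrightarrow> mat_vec V M u' x = of_real \<theta> * u' x" for u'
  proof -
    have "\<chi> * (\<Sum>x\<in>V. u' x * w x) = (\<Sum>x\<in>V. u' x * exp_evolve V M \<tau> v x)"
      by (simp add: pst sum_distrib_left mult_ac)
    also have "\<dots> = l * (\<Sum>x\<in>V. u' x * v x)"
      using evolve_dot[OF fin sym eig', of \<tau> v] l_exp by simp
    finally show ?thesis .
  qed
  define p where "p = (\<Sum>x\<in>V. u x * v x)"
  define q where "q = (\<Sum>x\<in>V. u x * w x)"
  have e1: "\<chi> * q = l * p" using gen[OF eig] by (simp add: p_def q_def)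
  have e2: "\<chi> * cnj q = l * cnj p"
  proof -
    have "\<chi> * (\<Sum>x\<in>V. cnj (u x) * w x) = l * (\<Sum>x\<in>V. cnj (u x) * v x)"
      by (rule gen) (rule eig_cnj[OF realM eig])
    moreover have "(\<Sum>x\<in>V. cnj (u x) * w x) = cnj q" unfolding q_def
      by (simp add: real_cnj[OF wreal])
    moreover have "(\<Sum>x\<in>V. cnj (u x) * v x) = cnj p" unfolding p_def
      by (simp add: real_cnj[OF vreal])
    ultimately show ?thesis by simp
  qed
  show "q = l / \<chi> * p" using e1 chi0 by (simp add: field_simps)
  assume "p \<noteq> 0"
  have lc: "cnj l * l = 1" by (simp add: l_def cis_cnj cis_mult)
  have cc: "\<chi> * cnj \<chi> = 1" using chi by (simp add: complex_norm_square[symmetric])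
  from e1 have "cnj \<chi> * cnj q = cnj l * cnj p"
    by (metis complex_cnj_mult)
  hence "(\<chi> * cnj \<chi>) * (cnj q * l) = (cnj l * l) * (\<chi> * cnj p)" by algebra
  hence "cnj q * l = \<chi> * cnj p" by (simp only: lc cc mult_1_left)
  hence "\<chi> * cnj q * l = \<chi> * \<chi> * cnj p" by (simp add: mult_ac)
  hence "l * cnj p * l = \<chi> * \<chi> * cnj p" using e2 by simp
  moreover have "cnj p \<noteq> 0" using \<open>p \<noteq> 0\<close> by simp
  ultimately show "l ^ 2 = \<chi> ^ 2" by (simp add: power2_eq_square mult_ac)
qed

definition sc :: "nat \<Rightarrow> nat \<Rightarrow> nat" where "sc n k = (if k + 1 = n then 0 else k + 1)"
definition pr :: "nat \<Rightarrow> nat \<Rightarrow> nat" where "pr n k = (if k = 0 then n - 1 else k - 1)"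
definition edge :: "nat \<Rightarrow> nat \<Rightarrow> nat set" where "edge n k = {k, sc n k}"
definition VV :: "nat \<Rightarrow> (nat + nat set) set" where "VV n = Q_verts {0..<n} (cycle_adj n)"
definition eidx :: "nat \<Rightarrow> nat set \<Rightarrow> nat" where "eidx n e = (THE k. k < n \<and> e = edge n k)"

lemma sc_mod: "k < n \<Longrightarrow> (k + 1) mod n = sc n k"
  by (auto simp: sc_def)

lemma sc_lt: "k < n \<Longrightarrow> sc n k < n" by (auto simp: sc_def)
lemma pr_lt: "k < n \<Longrightarrow> pr n k < n" by (auto simp: pr_def)
lemma sc_pr: "k < n \<Longrightarrow> sc n (pr n k) = k" by (auto simp: sc_def pr_def)
lemma pr_sc: "k < n \<Longrightarrow> pr n (sc n k) = k" by (auto simp: sc_def pr_def)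
lemma sc_inj: "k < n \<Longrightarrow> m < n \<Longrightarrow> sc n k = sc n m \<Longrightarrow> k = m" by (auto simp: sc_def split: if_splits)
lemma sc_neq: "2 \<le> n \<Longrightarrow> k < n \<Longrightarrow> sc n k \<noteq> k" by (auto simp: sc_def)
lemma pr_neq: "2 \<le> n \<Longrightarrow> k < n \<Longrightarrow> pr n k \<noteq> k" by (auto simp: pr_def)
lemma sc_pr_neq: "3 \<le> n \<Longrightarrow> k < n \<Longrightarrow> sc n k \<noteq> pr n k" by (auto simp: sc_def pr_def)
lemma sc_eq_iff: "k < n \<Longrightarrow> i < n \<Longrightarrow> (i = sc n k) = (k = pr n i)"
  by (auto simp: sc_def pr_def)

lemma sc_sc_neq: "3 \<le> n \<Longrightarrow> m < n \<Longrightarrow> sc n (sc n m) \<noteq> m"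
  by (auto simp: sc_def)

lemma edge_inj:
  assumes n: "3 \<le> n" and k: "k < n" and m: "m < n" and e: "edge n k = edge n m" shows "k = m"
proof (rule ccontr)
  assume ne: "k \<noteq> m"
  have "k \<in> edge n k" by (simp add: edge_def)
  then have "k \<in> edge n m" using e by simp
  then have km: "k = sc n m" using ne by (simp add: edge_def)
  have "sc n k \<in> edge n k" by (simp add: edge_def)
  then have "sc n k \<in> edge n m" using e by simp
  then have "sc n k = m \<or> sc n k = sc n m" by (simp add: edge_def)
  then show False
    using sc_sc_neq[OF n m] km sc_inj[OF k m] ne by auto
qed

lemma graph_edges_cyc: "graph_edges {0..<n} (cycle_adj n) = edge n ` {0..<n}"
proof (intro equalityI subsetI)
  fix e assume "e \<in> graph_edges {0..<n} (cycle_adj n)"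
  then obtain u v where e: "e = {u, v}" "u < n" "v < n" "v = (u + 1) mod n \<or> u = (v + 1) mod n"
    by (auto simp: graph_edges_def cycle_adj_def)
  then show "e \<in> edge n ` {0..<n}"
  proof (cases "v = (u + 1) mod n")
    case True then have "e = edge n u" using e sc_mod[of u n] by (simp add: edge_def)
    then show ?thesis using e by auto
  next
    case False then have "u = sc n v" using e sc_mod[of v n] by simp
    then have "e = edge n v" using e by (auto simp: edge_def)
    then show ?thesis using e by auto
  qed
next
  fix e assume "e \<in> edge n ` {0..<n}"
  then obtain k where k: "k < n" "e = edge n k" by auto
  have e: "e = {k, (k + 1) mod n}" using k sc_mod[of k n] by (simp add: edge_def)
  have "(k + 1) mod n < n" using k by simp
  moreover have "cycle_adj n k ((k + 1) mod n)" by (simp add: cycle_adj_def)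
  ultimately have "\<exists>u v. e = {u, v} \<and> u \<in> {0..<n} \<and> v \<in> {0..<n} \<and> cycle_adj n u v"
    using e k by (intro exI[of _ k] exI[of _ "(k + 1) mod n"]) simp
  then show "e \<in> graph_edges {0..<n} (cycle_adj n)"
    unfolding graph_edges_def by simp
qed

lemma VV_eq: "VV n = Inl ` {0..<n} \<union> Inr ` edge n ` {0..<n}"
  by (simp add: VV_def Q_verts_def graph_edges_cyc)

lemma VV_finite: "finite (VV n)" by (simp add: VV_eq)

lemma VV_cases:
  assumes "x \<in> VV n"
  obtains (L) i where "x = Inl i" "i < n" | (R) k where "x = Inr (edge n k)" "k < n"
  using assms by (auto simp: VV_eq)

lemma eidx_edge: "3 \<le> n \<Longrightarrow> k < n \<Longrightarrow> eidx n (edge n k) = k"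
  unfolding eidx_def by (rule the_equality) (auto dest: edge_inj)

lemma mem_edge: "i \<in> edge n k \<longleftrightarrow> i = k \<or> i = sc n k" by (auto simp: edge_def)

lemma edges_adj:
  assumes "3 \<le> n" "k < n" "m < n"
  shows "(edge n k \<noteq> edge n m \<and> edge n k \<inter> edge n m \<noteq> {}) \<longleftrightarrow> m = sc n k \<or> m = pr n k"
proof -
  have n2: "2 \<le> n" using assms by simp
  have i: "edge n k \<inter> edge n m \<noteq> {} \<longleftrightarrow> k = m \<or> k = sc n m \<or> sc n k = m \<or> sc n k = sc n m"
    by (auto simp: edge_def)
  have ne: "edge n k \<noteq> edge n m \<longleftrightarrow> k \<noteq> m" using edge_inj[OF assms] by auto
  have "k = sc n m \<longleftrightarrow> m = pr n k" using sc_eq_iff[OF assms(3) assms(2)] .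
  then show ?thesis unfolding i ne
    using sc_inj[OF assms(2,3)] sc_neq[OF n2 assms(2)] pr_neq[OF n2 assms(2)] by auto
qed

lemma nbr_L:
  assumes "3 \<le> n" "i < n"
  shows "{z \<in> VV n. Q_adj (Inl i) z} = {Inr (edge n i), Inr (edge n (pr n i))}"
proof (intro equalityI subsetI)
  fix z :: "nat + nat set" assume "z \<in> {z \<in> VV n. Q_adj (Inl i) z}"
  then have zV: "z \<in> VV n" and za: "Q_adj (Inl i) z" by auto
  from zV show "z \<in> {Inr (edge n i), Inr (edge n (pr n i))}"
  proof (cases rule: VV_cases)
    case (L j) then show ?thesis using za by simp
  next
    case (R m) then have "i = m \<or> i = sc n m" using za by (simp add: mem_edge)
    then have "m = i \<or> m = pr n i" using sc_eq_iff[OF R(2) assms(2)] by auto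
    then show ?thesis using R by auto
  qed
next
  fix z :: "nat + nat set" assume "z \<in> {Inr (edge n i), Inr (edge n (pr n i))}"
  then show "z \<in> {z \<in> VV n. Q_adj (Inl i) z}"
    using assms pr_lt[OF assms(2)] sc_pr[OF assms(2)] by (auto simp: VV_eq mem_edge)
qed

lemma nbr_R:
  assumes "3 \<le> n" "k < n"
  shows "{z \<in> VV n. Q_adj (Inr (edge n k)) z} =
     {Inl k, Inl (sc n k), Inr (edge n (sc n k)), Inr (edge n (pr n k))}"
proof -
  have *: "Q_adj (Inr (edge n k)) (Inr (edge n m)) \<longleftrightarrow> m = sc n k \<or> m = pr n k" if "m < n" for m
    using edges_adj[OF assms that] by simp
  show ?thesis
  proof (intro equalityI subsetI)
    fix z :: "nat + nat set" assume z: "z \<in> {z \<in> VV n. Q_adj (Inr (edge n k)) z}"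
    then have zV: "z \<in> VV n" and za: "Q_adj (Inr (edge n k)) z" by auto
    from zV show "z \<in> {Inl k, Inl (sc n k), Inr (edge n (sc n k)), Inr (edge n (pr n k))}"
    proof (cases rule: VV_cases)
      case (L i) then show ?thesis using za by (simp add: mem_edge)
    next
      case (R m) then have "m = sc n k \<or> m = pr n k" using za *[of m] by simp
      then show ?thesis using R by blast
    qed
  next
    fix z :: "nat + nat set" assume z: "z \<in> {Inl k, Inl (sc n k), Inr (edge n (sc n k)), Inr (edge n (pr n k))}"
    have V: "Inl k \<in> VV n" "Inl (sc n k) \<in> VV n" "Inr (edge n (sc n k)) \<in> VV n" "Inr (edge n (pr n k)) \<in> VV n"
      using assms sc_lt[OF assms(2)] pr_lt[OF assms(2)] by (simp_all add: VV_eq)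
    have A: "Q_adj (Inr (edge n k)) (Inr (edge n (sc n k)))" "Q_adj (Inr (edge n k)) (Inr (edge n (pr n k)))"
      using *[OF sc_lt[OF assms(2)]] *[OF pr_lt[OF assms(2)]] by simp_all
    have A2: "Q_adj (Inr (edge n k)) (Inl k)" "Q_adj (Inr (edge n k)) (Inl (sc n k))"
      by (simp_all add: mem_edge)
    from z V A A2 show "z \<in> {z \<in> VV n. Q_adj (Inr (edge n k)) z}" by blast
  qed
qed

lemma lap_mat_vec:
  assumes "finite V" "x \<in> V"
  shows "mat_vec V (laplacian V A) u x = of_nat (card {z\<in>V. A x z}) * u x - (\<Sum>y\<in>{z\<in>V. A x z}. u y)"
proof -
  have "mat_vec V (laplacian V A) u x =
     (\<Sum>y\<in>V. (if x = y then of_nat (card {z\<in>V. A x z}) * u y else 0)) - (\<Sum>y\<in>V. (if A x y then u y else 0))"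
  proof -
    have "laplacian V A x y * u y = (if x = y then of_nat (card {z\<in>V. A x z}) * u y else 0) - (if A x y then u y else 0)" for y
      by (simp add: laplacian_def left_diff_distrib)
    then show ?thesis unfolding mat_vec_def by (simp add: sum_subtractf)
  qed
  also have "\<dots> = of_nat (card {z\<in>V. A x z}) * u x - (\<Sum>y\<in>{z\<in>V. A x z}. u y)"
    using assms by (simp add: sum.inter_filter[symmetric])
  finally show ?thesis .
qed

definition vec :: "nat \<Rightarrow> complex \<Rightarrow> complex \<Rightarrow> complex \<Rightarrow> nat + nat set \<Rightarrow> complex" where
  "vec n X Y w x = (case x of Inl i \<Rightarrow> X * w ^ i | Inr e \<Rightarrow> Y * w ^ eidx n e)"

lemma vec_L[simp]: "vec n X Y w (Inl i) = X * w ^ i" by (simp add: vec_def)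
lemma vec_R: "3 \<le> n \<Longrightarrow> k < n \<Longrightarrow> vec n X Y w (Inr (edge n k)) = Y * w ^ k"
  by (simp add: vec_def eidx_edge)

lemma pow_sc: "(w::complex) ^ n = 1 \<Longrightarrow> k < n \<Longrightarrow> w ^ sc n k = w ^ k * w"
  by (cases "k + 1 = n") (auto simp: sc_def mult.commute[of w])

lemma pow_pr: "(w::complex) ^ n = 1 \<Longrightarrow> k < n \<Longrightarrow> w ^ pr n k = w ^ k * w ^ (n - 1)"
proof (cases "k = 0")
  case True then show ?thesis by (simp add: pr_def)
next
  case False
  assume "w ^ n = 1" "k < n"
  have "k + (n - 1) = (k - 1) + n" using False \<open>k < n\<close> by simp
  then have "w ^ k * w ^ (n - 1) = w ^ (k - 1) * w ^ n"
    by (simp only: power_add[symmetric])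
  then show ?thesis using False \<open>w ^ n = 1\<close> by (simp add: pr_def)
qed

lemma Q_adj_sym: "Q_adj x y = Q_adj y x"
  by (cases x; cases y) auto

lemma lap_sym: "laplacian V Q_adj x y = laplacian V Q_adj y x"
  by (auto simp: laplacian_def Q_adj_sym)

lemma lap_real: "Im (laplacian V A x y) = 0"
  by (simp add: laplacian_def)

lemma vec_eigen:
  fixes X Y w :: complex and \<theta> :: real
  assumes n: "3 \<le> n" and wn: "w ^ n = 1"
    and eq1: "2 * X - (1 + w ^ (n - 1)) * Y = of_real \<theta> * X"
    and eq2: "- (1 + w) * X + (4 - w - w ^ (n - 1)) * Y = of_real \<theta> * Y"
    and x: "x \<in> VV n"
  shows "mat_vec (VV n) (laplacian (VV n) Q_adj) (vec n X Y w) x = of_real \<theta> * vec n X Y w x"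
  using x
proof (cases rule: VV_cases)
  case (L i)
  have ne: "Inr (edge n i) \<noteq> (Inr (edge n (pr n i)) :: nat + nat set)"
    using edge_inj[OF n L(2) pr_lt[OF L(2)]] pr_neq[of n i] n L(2) by auto
  have N: "{z \<in> VV n. Q_adj x z} = {Inr (edge n i), Inr (edge n (pr n i))}"
    using nbr_L[OF n L(2)] L(1) by simp
  have "mat_vec (VV n) (laplacian (VV n) Q_adj) (vec n X Y w) x
      = 2 * (X * w ^ i) - (Y * w ^ i + Y * (w ^ i * w ^ (n - 1)))"
    unfolding lap_mat_vec[OF VV_finite x] N
    using ne L n by (simp add: vec_R pr_lt pow_pr[OF wn])
  also have "\<dots> = w ^ i * (2 * X - (1 + w ^ (n - 1)) * Y)" by (simp add: algebra_simps)
  also have "\<dots> = of_real \<theta> * vec n X Y w x" using L eq1 by simp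
  finally show ?thesis .
next
  case (R k)
  have n2: "2 \<le> n" using n by simp
  have ne1: "sc n k \<noteq> k" using sc_neq[OF n2 R(2)] .
  have ne2: "edge n (sc n k) \<noteq> edge n (pr n k)"
    using edge_inj[OF n sc_lt[OF R(2)] pr_lt[OF R(2)]] sc_pr_neq[OF n R(2)] by auto
  have N: "{z \<in> VV n. Q_adj x z} = {Inl k, Inl (sc n k), Inr (edge n (sc n k)), Inr (edge n (pr n k))}"
    using nbr_R[OF n R(2)] R(1) by simp
  have c: "card {Inl k, Inl (sc n k), Inr (edge n (sc n k)), Inr (edge n (pr n k)) :: nat + nat set} = 4"
    using ne1 ne2 by simp
  have "mat_vec (VV n) (laplacian (VV n) Q_adj) (vec n X Y w) x
      = 4 * (Y * w ^ k) - (X * w ^ k + (X * (w ^ k * w) + (Y * (w ^ k * w) + Y * (w ^ k * w ^ (n - 1)))))"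
    unfolding lap_mat_vec[OF VV_finite x] N c
    using ne1 ne2 R n
    by (simp add: vec_R sc_lt pr_lt pow_pr[OF wn] pow_sc[OF wn])
  also have "\<dots> = w ^ k * (- (1 + w) * X + (4 - w - w ^ (n - 1)) * Y)" by (simp add: algebra_simps)
  also have "\<dots> = of_real \<theta> * vec n X Y w x" using R eq2 n by (simp add: vec_R)
  finally show ?thesis .
qed

fun bseq :: "int \<Rightarrow> int \<Rightarrow> nat \<Rightarrow> int" where
  "bseq p q 0 = 2"
| "bseq p q (Suc 0) = p"
| "bseq p q (Suc (Suc m)) = p * bseq p q (Suc m) - q ^ 2 * bseq p q m"

lemma cos_rec: "2 * cos (real (Suc (Suc m)) * \<phi>) = 2 * cos \<phi> * (2 * cos (real (Suc m) * \<phi>)) - 2 * cos (real m * \<phi>)"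
proof -
  have a: "real (Suc (Suc m)) * \<phi> = real (Suc m) * \<phi> + \<phi>" by (simp add: algebra_simps)
  have b: "real m * \<phi> = real (Suc m) * \<phi> - \<phi>" by (simp add: algebra_simps)
  show ?thesis unfolding a b cos_add cos_diff by (simp add: algebra_simps)
qed

lemma bseq_eq:
  assumes q: "q \<noteq> 0" and x: "2 * cos \<phi> = of_int p / of_int q"
  shows "of_int (bseq p q m) = of_int q ^ m * (2 * cos (real m * \<phi>))"
proof -
  have "of_int (bseq p q m) = of_int q ^ m * (2 * cos (real m * \<phi>)) \<and>
        of_int (bseq p q (Suc m)) = of_int q ^ Suc m * (2 * cos (real (Suc m) * \<phi>))"
  proof (induction m)
    case 0 then show ?case using x q by simp
  next
    case (Suc m)
    have "of_int (bseq p q (Suc (Suc m))) = of_int p * of_int (bseq p q (Suc m)) - of_int q ^ 2 * of_int (bseq p q m)"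
      by simp
    also have "\<dots> = of_int p * (of_int q ^ Suc m * (2 * cos (real (Suc m) * \<phi>))) - of_int q ^ 2 * (of_int q ^ m * (2 * cos (real m * \<phi>)))"
      using Suc by simp
    also have "\<dots> = of_int q ^ Suc (Suc m) * ((of_int p / of_int q) * (2 * cos (real (Suc m) * \<phi>)) - 2 * cos (real m * \<phi>))"
      using q by (simp add: field_simps power2_eq_square)
    also have "\<dots> = of_int q ^ Suc (Suc m) * (2 * cos (real (Suc (Suc m)) * \<phi>))"
      unfolding cos_rec[of m \<phi>] x[symmetric] by simp
    finally show ?case using Suc by simp
  qed
  then show ?thesis by simp
qed

lemma bseq_mod: "m \<ge> 1 \<Longrightarrow> q dvd (bseq p q m - p ^ m)"
proof -
  have "q dvd (bseq p q (Suc m) - p ^ Suc m) \<and> q dvd (bseq p q (Suc (Suc m)) - p ^ Suc (Suc m))" for m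
  proof (induction m)
    case 0
    have "bseq p q 2 - p ^ 2 = q * (- q * 2)" by (simp add: numeral_2_eq_2 power2_eq_square)
    then show ?case by (simp add: numeral_2_eq_2[symmetric])
  next
    case (Suc m)
    have "bseq p q (Suc (Suc (Suc m))) - p ^ Suc (Suc (Suc m)) =
          p * (bseq p q (Suc (Suc m)) - p ^ Suc (Suc m)) - q * (q * bseq p q (Suc m))"
      by (simp add: algebra_simps power2_eq_square)
    moreover have "q dvd p * (bseq p q (Suc (Suc m)) - p ^ Suc (Suc m)) - q * (q * bseq p q (Suc m))"
    proof (rule dvd_diff)
      show "q dvd p * (bseq p q (Suc (Suc m)) - p ^ Suc (Suc m))" using Suc.IH by (intro dvd_mult) simp
    qed simp
    ultimately show ?case using Suc by simp
  qed
  then show "m \<ge> 1 \<Longrightarrow> q dvd (bseq p q m - p ^ m)"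
    by (cases m) auto
qed

lemma two_cos_rat_int:
  assumes n: "n > 0" and r: "2 * cos (2 * pi * real k / real n) \<in> \<rat>"
  shows "2 * cos (2 * pi * real k / real n) \<in> \<int>"
proof -
  define \<phi> where "\<phi> = 2 * pi * real k / real n"
  obtain p q where q: "q > 0" and cop: "coprime p q" and x: "2 * cos \<phi> = of_int p / of_int q"
    using r Rats_cases' unfolding \<phi>_def[symmetric] by metis
  have "real n * \<phi> = (2 * pi) * of_int (int k)" using n by (simp add: \<phi>_def)
  then have cn: "cos (real n * \<phi>) = 1" by (simp only: cos_int_2pin)
  have "(of_int (bseq p q n) :: real) = of_int q ^ n * 2"
    using bseq_eq[of q \<phi> p n] q x cn by simp
  then have "(of_int (bseq p q n) :: real) = of_int (q ^ n * 2)" by simp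
  then have bn: "bseq p q n = q ^ n * 2" by (simp only: of_int_eq_iff)
  have "q dvd bseq p q n" using n by (simp add: bn)
  moreover have "q dvd (bseq p q n - p ^ n)" using bseq_mod[of n q p] n by simp
  ultimately have "q dvd bseq p q n - (bseq p q n - p ^ n)" by (rule dvd_diff)
  then have qd: "q dvd p ^ n" by simp
  have "coprime q (p ^ n)" using cop by (simp add: coprime_commute)
  then have "is_unit q" using coprime_common_divisor[OF _ dvd_refl qd] by blast
  then have "q = 1" using q by simp
  then show ?thesis using x unfolding \<phi>_def by simp
qed

lemma int_sq_bad:
  fixes z :: int
  assumes "z ^ 2 = N" "N \<in> {3, 5, 7, 13}"
  shows False
proof (cases "\<bar>z\<bar> \<le> 3")
  case True
  then have "z \<in> {-3, -2, -1, 0, 1, 2, 3}" by auto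
  then show ?thesis using assms by auto
next
  case False
  then have "4 * 4 \<le> \<bar>z\<bar> * \<bar>z\<bar>" by (intro mult_mono) auto
  then have "16 \<le> z ^ 2" by (simp add: power2_eq_square abs_mult[symmetric])
  then show ?thesis using assms by auto
qed

lemma rat_sq_bad:
  fixes x :: real
  assumes x: "x \<in> \<rat>" and sq: "x ^ 2 = of_int N" and N: "N \<in> {3, 5, 7, 13}"
  shows False
proof -
  obtain p q where q: "q > 0" and cop: "coprime p q" and xq: "x = of_int p / of_int q"
    using x Rats_cases' by metis
  have "of_int p ^ 2 = of_int N * (of_int q ^ 2 :: real)"
    using sq q unfolding xq by (simp add: field_simps)
  then have "(of_int (p ^ 2) :: real) = of_int (N * q ^ 2)" by simp
  then have pq: "p ^ 2 = N * q ^ 2" by (simp only: of_int_eq_iff)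
  then have qd: "q dvd p ^ 2" by (simp add: power2_eq_square)
  have "coprime q (p ^ 2)" using cop by (simp add: coprime_commute)
  then have "is_unit q" using coprime_common_divisor[OF _ dvd_refl qd] by blast
  then have "q = 1" using q by simp
  then show False using pq N int_sq_bad[of p N] by simp
qed

definition Dg :: "real \<Rightarrow> real \<Rightarrow> bool" where "Dg g x \<longleftrightarrow> (\<exists>k::int. x = of_int k * g)"

lemma lemC:
  assumes g: "g \<noteq> 0" and s: "s \<noteq> 0" and c: "c \<in> \<rat>" and q: "q \<in> \<rat>" and cq: "3 - c - q \<noteq> 0"
    and d1: "Dg g (2 * s)" and d2: "Dg g (3 - c + s - q)"
  shows "s \<in> \<rat>"
proof -
  obtain m :: int where m: "2 * s = of_int m * g" using d1 by (auto simp: Dg_def)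
  obtain k :: int where k: "3 - c + s - q = of_int k * g" using d2 by (auto simp: Dg_def)
  have e: "3 - c - q = (of_int k - of_int m / 2) * g" using m k by (simp add: algebra_simps)
  then have ne: "of_int k - of_int m / 2 \<noteq> (0::real)" using cq by auto
  have "g = (3 - c - q) / (of_int k - of_int m / 2)" using e ne by (simp add: field_simps)
  also have "\<dots> \<in> \<rat>" using c q by (intro Rats_divide Rats_diff Rats_of_int) auto
  finally have "g \<in> \<rat>" .
  then have mg: "of_int m * g / 2 \<in> \<rat>" by (intro Rats_divide Rats_mult) auto
  have sm: "s = of_int m * g / 2" using m by linarith
  show ?thesis unfolding sm using mg .
qed

lemma lemA:
  assumes g: "g \<noteq> 0" and s: "s ^ 2 = 3 + c ^ 2" and s': "s' ^ 2 = 3 + c' ^ 2" and cc: "c \<noteq> c'"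
    and d1: "Dg g (2 * s)" and d2: "Dg g (2 * s')" and d3: "Dg g ((3 - c + s) - (3 - c' + s'))"
  shows "\<exists>\<mu>\<in>\<rat>. c = \<mu> * g \<and> g ^ 2 \<in> \<rat> \<and> s / c \<in> \<rat>"
proof -
  obtain m :: int where m: "2 * s = of_int m * g" using d1 by (auto simp: Dg_def)
  obtain m' :: int where m': "2 * s' = of_int m' * g" using d2 by (auto simp: Dg_def)
  obtain k :: int where k: "(3 - c + s) - (3 - c' + s') = of_int k * g" using d3 by (auto simp: Dg_def)
  have sm: "s = of_int m * g / 2" using m by linarith
  have sm': "s' = of_int m' * g / 2" using m' by linarith
  define r where "r = of_int k - (of_int m - of_int m') / (2::real)"
  have rg: "r * g = of_int k * g - (of_int m * g / 2 - of_int m' * g / 2)"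
    by (simp add: r_def field_simps)
  have r: "c' - c = r * g" using k sm sm' rg by linarith
  have rQ: "r \<in> \<rat>" by (simp add: r_def)
  have r0: "r \<noteq> 0" using r cc by auto
  have s2: "s ^ 2 = of_int m ^ 2 * g ^ 2 / 4" unfolding sm by (simp add: power_mult_distrib power_divide)
  have s2': "s' ^ 2 = of_int m' ^ 2 * g ^ 2 / 4" unfolding sm' by (simp add: power_mult_distrib power_divide)
  have "(c - c') * (c + c') = s ^ 2 - s' ^ 2" using s s' by (simp add: algebra_simps power2_eq_square)
  also have "\<dots> = (of_int m ^ 2 - of_int m' ^ 2) * g ^ 2 / 4" unfolding s2 s2' by (simp add: algebra_simps)
  finally have h: "- r * g * (c + c') = (of_int m ^ 2 - of_int m' ^ 2) * g ^ 2 / 4"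
    using r by (metis minus_diff_eq mult_minus_left)
  have rg0: "- r * g \<noteq> 0" using r0 g by simp
  have "c + c' = (- r * g * (c + c')) / (- r * g)" using rg0 by simp
  also have "\<dots> = - (of_int m ^ 2 - of_int m' ^ 2) / (4 * r) * g"
    unfolding h using g r0 by (simp add: field_simps power2_eq_square)
  finally have cc': "c + c' = - (of_int m ^ 2 - of_int m' ^ 2) / (4 * r) * g" .
  define A where "A = - (of_int m ^ 2 - of_int m' ^ 2) / (4 * r)"
  define \<mu> where "\<mu> = (A - r) / 2"
  have mg: "\<mu> * g = (A * g - r * g) / 2"
    by (simp add: \<mu>_def algebra_simps)
  have cc2: "c + c' = A * g" using cc' by (simp add: A_def)
  have "2 * c = A * g - r * g" using cc2 r by linarith
  then have cmu: "c = \<mu> * g" using mg by (simp add: field_simps)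
  have muQ: "\<mu> \<in> \<rat>" using rQ by (simp add: \<mu>_def A_def)
  have "3 = s ^ 2 - c ^ 2" using s by simp
  also have "\<dots> = (of_int m ^ 2 / 4 - \<mu> ^ 2) * g ^ 2" unfolding s2 cmu
    by (simp add: power_mult_distrib algebra_simps)
  finally have e3: "3 = (of_int m ^ 2 / 4 - \<mu> ^ 2) * g ^ 2" .
  then have ne: "of_int m ^ 2 / 4 - \<mu> ^ 2 \<noteq> (0::real)" by auto
  have "g ^ 2 = 3 / (of_int m ^ 2 / 4 - \<mu> ^ 2)" using e3 ne by (simp add: field_simps)
  also have "\<dots> \<in> \<rat>" using muQ by simp
  finally have g2: "g ^ 2 \<in> \<rat>" .
  have sc: "s / c = of_int m / (2 * \<mu>)" using m cmu g
    by (metis divide_divide_eq_left' mult_of_int_commute nonzero_eq_divide_eq of_int_numeral zero_neq_numeral)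
  show ?thesis using muQ cmu g2 sc by (intro bexI[of _ \<mu>]) auto
qed

lemma finalA:
  assumes n: "5 \<le> n" and c: "c = cos (2 * pi / real n)" and s: "s ^ 2 = 3 + c ^ 2"
    and mu: "\<mu> \<in> \<rat>" "c = \<mu> * g" and g2: "g ^ 2 \<in> \<rat>" and sc: "s / c \<in> \<rat>"
  shows False
proof -
  have pos: "0 < 2 * pi / real n" using n by simp
  have lt: "2 * pi / real n < pi / 2"
  proof -
    have "2 * pi / real n \<le> 2 * pi / 5" using n by (intro divide_left_mono) auto
    also have "\<dots> < pi / 2" by simp
    finally show ?thesis .
  qed
  have c0: "0 < c" unfolding c using pos lt by (intro cos_gt_zero) auto
  have c1: "c < 1" unfolding c using pos lt cos_monotone_0_pi[of 0 "2 * pi / real n"] by simp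
  have c2Q: "c ^ 2 \<in> \<rat>" using mu g2 by (simp add: power_mult_distrib)
  have "2 * cos (2 * pi * real 2 / real n) = 2 * (2 * c ^ 2 - 1)"
    using cos_double_cos[of "2 * pi / real n"] unfolding c by (simp add: mult_ac)
  then have z: "2 * (2 * c ^ 2 - 1) \<in> \<int>"
    using two_cos_rat_int[of n 2] n c2Q by simp
  then obtain z :: int where zz: "2 * (2 * c ^ 2 - 1) = of_int z" by (metis Ints_cases)
  have "c ^ 2 < 1" using c0 c1 by (simp add: power2_eq_square) (metis mult_strict_mono' less_le_not_le mult_1_left c0 c1 less_imp_le)
  moreover have "0 < c ^ 2" using c0 by simp
  ultimately have "-2 < (of_int z::real)" using zz by (smt (verit))
  moreover have "of_int z < (2::real)" using zz \<open>c ^ 2 < 1\<close> by (smt (verit))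
  ultimately
  have "-2 < z" "z < 2" using \<open>-2 < (of_int z::real)\<close> \<open>of_int z < (2::real)\<close> by linarith+
  then have "z \<in> {-1, 0, 1}" by auto
  then have "c ^ 2 \<in> {1/4, 1/2, 3/4}" using zz by auto
  moreover have "(s / c) ^ 2 = 1 + 3 / c ^ 2" using s c0 by (simp add: power_divide field_simps)
  ultimately have "(s / c) ^ 2 = 13 \<or> (s / c) ^ 2 = 7 \<or> (s / c) ^ 2 = 5" by fastforce
  then have "(s / c) ^ 2 = of_int 13 \<or> (s / c) ^ 2 = of_int 7 \<or> (s / c) ^ 2 = of_int 5" by simp
  then show False using rat_sq_bad[OF sc] by auto
qed

lemma finalC:
  fixes s c :: real
  assumes s: "s ^ 2 = 3 + c ^ 2" and c: "c \<in> {-1/2, 0, 1/2}" and sQ: "s \<in> \<rat>"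
  shows False
proof -
  have s2Q: "2 * s \<in> \<rat>" using sQ by simp
  from c consider "c = 0" | "c = -1/2 \<or> c = 1/2" by auto
  then show False
  proof cases
    case 1 then have "s ^ 2 = of_int 3" using s by simp
    then show False using rat_sq_bad[OF sQ] by auto
  next
    case 2 have "c ^ 2 = 1/4"
    proof (rule disjE[OF 2])
      assume e: "c = -1/2" show ?thesis unfolding e by (simp add: power2_eq_square)
    next
      assume e: "c = 1/2" show ?thesis unfolding e by (simp add: power2_eq_square)
    qed
    then have "(2 * s) ^ 2 = of_int 13" using s by (simp add: power_mult_distrib)
    then show False using rat_sq_bad[OF s2Q] by auto
  qed
qed

definition eigdata :: "nat \<Rightarrow> complex \<Rightarrow> complex \<Rightarrow> complex \<Rightarrow> real \<Rightarrow> bool" where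
  "eigdata n X Y w \<theta> \<longleftrightarrow> w ^ n = 1 \<and> 2 * X - (1 + w ^ (n - 1)) * Y = of_real \<theta> * X \<and>
     - (1 + w) * X + (4 - w - w ^ (n - 1)) * Y = of_real \<theta> * Y"

lemma eigdata_eigen:
  "3 \<le> n \<Longrightarrow> eigdata n X Y w \<theta> \<Longrightarrow> x \<in> VV n \<Longrightarrow>
    mat_vec (VV n) (laplacian (VV n) Q_adj) (vec n X Y w) x = of_real \<theta> * vec n X Y w x"
  unfolding eigdata_def by (rule vec_eigen) auto

definition wj :: "nat \<Rightarrow> nat \<Rightarrow> complex" where "wj n j = cis (2 * pi * real j / real n)"
definition cj :: "nat \<Rightarrow> nat \<Rightarrow> real" where "cj n j = cos (2 * pi * real j / real n)"
definition sj :: "nat \<Rightarrow> nat \<Rightarrow> real" where "sj n j = sqrt (3 + (cj n j) ^ 2)"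

lemma sj_sq: "sj n j ^ 2 = 3 + cj n j ^ 2" by (simp add: sj_def)
lemma sj_pos: "sj n j > 0" by (simp add: sj_def add_pos_nonneg)

lemma wj_pow_n: "0 < n \<Longrightarrow> wj n j ^ n = 1"
proof -
  assume n: "0 < n"
  have "wj n j ^ n = cis (2 * pi * real j)" using n by (simp add: wj_def DeMoivre)
  also have "\<dots> = 1" by (simp add: cis_multiple_2pi)
  finally show ?thesis .
qed

lemma wj_pow_pred: "0 < n \<Longrightarrow> wj n j ^ (n - 1) = cnj (wj n j)"
proof -
  assume n: "0 < n"
  have "wj n j * wj n j ^ (n - 1) = 1" using wj_pow_n[OF n, of j] n
    by (metis Suc_diff_1 power_Suc)
  moreover have "wj n j * cnj (wj n j) = 1" by (simp add: wj_def cis_cnj cis_mult)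
  moreover have "wj n j \<noteq> 0" by (simp add: wj_def)
  ultimately show ?thesis by (metis mult_left_cancel)
qed

lemma wj_cnj_sum: "wj n j + cnj (wj n j) = of_real (2 * cj n j)"
  by (simp add: wj_def cj_def complex_add_cnj)

lemma wj_cnj_prod: "wj n j * cnj (wj n j) = 1"
  by (simp add: wj_def cis_cnj cis_mult)

lemma char_aux: "(\<theta>::real) = 3 - c + t \<Longrightarrow> t ^ 2 = 3 + c ^ 2 \<Longrightarrow> (4 - 2 * c - \<theta>) * (2 - \<theta>) = 2 + 2 * c"
  by algebra

lemma mode_eigdata:
  assumes n: "0 < n" and th: "\<theta> = 3 - cj n j + sj n j \<or> \<theta> = 3 - cj n j - sj n j"
  shows "eigdata n (1 + cnj (wj n j)) (of_real (2 - \<theta>)) (wj n j) \<theta>"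
proof -
  define w where "w = wj n j"
  define c where "c = cj n j"
  have ch: "(4 - 2 * c - \<theta>) * (2 - \<theta>) = 2 + 2 * c"
  proof (rule disjE[OF th])
    assume "\<theta> = 3 - cj n j + sj n j" then show ?thesis using char_aux sj_sq[of n j] unfolding c_def by blast
  next
    assume "\<theta> = 3 - cj n j - sj n j" then have "\<theta> = 3 - cj n j + (- sj n j)" by simp
    then show ?thesis using char_aux[of \<theta> "cj n j" "- sj n j"] sj_sq[of n j] unfolding c_def by simp
  qed
  have sum: "w + cnj w = of_real (2 * c)" by (simp add: w_def c_def wj_cnj_sum)
  have prod: "w * cnj w = 1" by (simp add: w_def wj_cnj_prod)
  have e1: "2 * (1 + cnj w) - (1 + cnj w) * of_real (2 - \<theta>) = of_real \<theta> * (1 + cnj w)"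
    by (simp add: algebra_simps)
  have "- (1 + w) * (1 + cnj w) + (4 - w - cnj w) * of_real (2 - \<theta>)
        = - (1 + (w + cnj w) + w * cnj w) + (4 - (w + cnj w)) * of_real (2 - \<theta>)"
    by (simp add: algebra_simps)
  also have "\<dots> = of_real (- (2 + 2 * c) + (4 - 2 * c) * (2 - \<theta>))" unfolding sum prod by simp
  also have "\<dots> = of_real (\<theta> * (2 - \<theta>))"
  proof -
    have r: "- (2 + 2 * c) + (4 - 2 * c) * (2 - \<theta>) = \<theta> * (2 - \<theta>)" using ch by algebra
    show ?thesis by (simp only: r)
  qed
  finally have e2: "- (1 + w) * (1 + cnj w) + (4 - w - cnj w) * of_real (2 - \<theta>) = of_real \<theta> * of_real (2 - \<theta>)"
    by simp
  show ?thesis unfolding eigdata_def using e1 e2 wj_pow_n[OF n] wj_pow_pred[OF n]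
    by (simp add: w_def)
qed

lemma mode0_eigdata: "0 < n \<Longrightarrow> eigdata n 1 (-1) 1 4"
  by (simp add: eigdata_def)

lemma modeh2_eigdata: "even n \<Longrightarrow> 0 < n \<Longrightarrow> eigdata n 1 0 (-1) 2"
  by (simp add: eigdata_def)

lemma modeh6_eigdata: "even n \<Longrightarrow> 0 < n \<Longrightarrow> eigdata n 0 1 (-1) 6"
proof -
  assume "even n" "0 < n"
  then have "odd (n - 1)" by simp
  then have "(-1 :: complex) ^ (n - 1) = -1" by simp
  then show ?thesis using \<open>even n\<close> by (simp add: eigdata_def)
qed

lemma wj_pow: "wj n j ^ i = cis (2 * pi * real j * real i / real n)"
  by (simp add: wj_def DeMoivre mult_ac)

lemma wj_pow_eq:
  assumes n: "0 < n" and e: "wj n j ^ i = wj n j ^ k"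
  shows "\<exists>m::int. int j * (int i - int k) = m * int n"
proof -
  define a where "a = 2 * pi * real j * real i / real n"
  define b where "b = 2 * pi * real j * real k / real n"
  have "cis a = cis b" using e by (simp add: wj_pow a_def b_def)
  then have "cis (a - b) = 1"
    by (metis cis_mult cis_cnj cis_zero diff_conv_add_uminus right_minus)
  then have "Re (cis (a - b)) = Re 1" by (rule arg_cong)
  then have "cos (a - b) = 1" by (simp only: cis.sel one_complex.sel)
  then obtain m :: int where m: "a - b = of_int m * 2 * pi" using cos_one_2pi_int by blast
  have "a - b = 2 * pi * (real j * (real i - real k)) / real n" by (simp add: a_def b_def algebra_simps diff_divide_distrib)
  then have "2 * pi * (real j * (real i - real k)) = of_int m * 2 * pi * real n" using m n by (simp add: field_simps)
  then have "real j * (real i - real k) = of_int m * real n" by simp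
  then have "of_int (int j * (int i - int k)) = (of_int (m * int n) :: real)" by simp
  then show ?thesis by (metis of_int_eq_iff)
qed

lemma w1_inj: "0 < n \<Longrightarrow> i < n \<Longrightarrow> k < n \<Longrightarrow> wj n 1 ^ i = wj n 1 ^ k \<Longrightarrow> i = k"
proof -
  assume n: "0 < n" and i: "i < n" and k: "k < n" and e: "wj n 1 ^ i = wj n 1 ^ k"
  obtain m :: int where m: "int i - int k = m * int n" using wj_pow_eq[OF n e] by auto
  have "m = 0"
  proof (rule ccontr)
    assume "m \<noteq> 0"
    then have "1 \<le> \<bar>m\<bar>" by simp
    then have "1 * int n \<le> \<bar>m\<bar> * int n" by (intro mult_right_mono) auto
    then have "\<bar>m * int n\<bar> \<ge> int n" by (simp add: abs_mult)
    then show False using m i k by linarith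
  qed
  then show "i = k" using m by simp
qed

lemma X_ne0: "cj n j \<noteq> -1 \<Longrightarrow> 1 + cnj (wj n j) \<noteq> 0"
proof
  assume c: "cj n j \<noteq> -1" and "1 + cnj (wj n j) = 0"
  then have "Re (1 + cnj (wj n j)) = 0" by simp
  then show False using c by (simp add: wj_def cj_def)
qed

lemma th_cases: "\<theta> = 3 - cj n j + sj n j \<or> \<theta> = 3 - cj n j - sj n j \<Longrightarrow>
   \<exists>\<sigma>::real. (\<sigma> = 1 \<or> \<sigma> = -1) \<and> \<theta> = 3 - cj n j + \<sigma> * sj n j"
  by (metis add_uminus_conv_diff mult_1 mult_minus_left)

lemma Y_ne0:
  assumes c: "cj n j \<noteq> -1" and th: "\<theta> = 3 - cj n j + sj n j \<or> \<theta> = 3 - cj n j - sj n j"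
  shows "(2 - \<theta>) \<noteq> 0"
proof
  assume "2 - \<theta> = 0"
  obtain \<sigma> :: real where sg: "\<sigma> = 1 \<or> \<sigma> = -1" and t: "\<theta> = 3 - cj n j + \<sigma> * sj n j" using th_cases[OF th] by blast
  have "\<sigma> * sj n j = cj n j - 1" using t \<open>2 - \<theta> = 0\<close> by simp
  then have "(\<sigma> * sj n j) ^ 2 = (cj n j - 1) ^ 2" by simp
  then have "3 + cj n j ^ 2 = (cj n j - 1) ^ 2" using sg sj_sq[of n j] by (auto simp: power_mult_distrib)
  then have "cj n j = -1" by (simp add: power2_eq_square algebra_simps)
  then show False using c by simp
qed

lemma X_norm_sq: "cmod (1 + cnj (wj n j)) ^ 2 = 2 + 2 * cj n j"
proof -
  define \<phi> where "\<phi> = 2 * pi * real j / real n"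
  have "1 + cnj (wj n j) = Complex (1 + cos \<phi>) (- sin \<phi>)"
    by (simp add: wj_def \<phi>_def complex_eq_iff)
  then have "cmod (1 + cnj (wj n j)) ^ 2 = (1 + cos \<phi>) ^ 2 + (sin \<phi>) ^ 2"
    by (simp add: cmod_def)
  also have "\<dots> = 2 + 2 * cos \<phi>" using sin_cos_squared_add[of \<phi>] by (simp add: power2_eq_square algebra_simps)
  finally show ?thesis by (simp add: cj_def \<phi>_def)
qed

lemma XY_norm:
  assumes c1: "cj n j \<noteq> 1" and c2: "cj n j \<noteq> -1"
    and th: "\<theta> = 3 - cj n j + sj n j \<or> \<theta> = 3 - cj n j - sj n j"
  shows "cmod (1 + cnj (wj n j)) \<noteq> cmod (of_real (2 - \<theta>))"
proof
  assume e: "cmod (1 + cnj (wj n j)) = cmod (of_real (2 - \<theta>))"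
  obtain \<sigma> :: real where sg: "\<sigma> = 1 \<or> \<sigma> = -1" and t: "\<theta> = 3 - cj n j + \<sigma> * sj n j" using th_cases[OF th] by blast
  define c where "c = cj n j"
  define s where "s = sj n j"
  have s2: "s ^ 2 = 3 + c ^ 2" by (simp add: s_def c_def sj_sq)
  have sg2: "\<sigma> ^ 2 = 1" using sg by auto
  have e': "cmod (1 + cnj (wj n j)) = \<bar>2 - \<theta>\<bar>" using e by (simp only: norm_of_real)
  have "2 + 2 * c = \<bar>2 - \<theta>\<bar> ^ 2" using e' X_norm_sq[of n j] by (simp add: c_def)
  also have "\<dots> = (2 - \<theta>) ^ 2" by simp
  also have "2 - \<theta> = c - 1 - \<sigma> * s" using t by (simp add: c_def s_def)
  finally have e2: "2 + 2 * c = (c - 1 - \<sigma> * s) ^ 2" .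
  have "(c - 1) * ((c - 1) - \<sigma> * s) = 0" using e2 s2 sg2 by algebra
  moreover have "c - 1 \<noteq> 0" using c1 by (simp add: c_def)
  ultimately have "\<sigma> * s = c - 1" by simp
  then have "(\<sigma> * s) ^ 2 = (c - 1) ^ 2" by simp
  then have "3 + c ^ 2 = (c - 1) ^ 2" using s2 sg2 by (simp add: power_mult_distrib)
  then have "c = -1" by (simp add: power2_eq_square algebra_simps)
  then show False using c2 by (simp add: c_def)
qed

lemma vecdiff_LL:
  assumes "X \<noteq> 0" "w ^ i \<noteq> w ^ k"
  shows "vec n X Y w (Inl i) \<noteq> vec n X Y w (Inl k)"
  using assms by simp

lemma vecdiff_RR:
  assumes "3 \<le> n" "i < n" "k < n" "Y \<noteq> 0" "w ^ i \<noteq> w ^ k"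
  shows "vec n X Y w (Inr (edge n i)) \<noteq> vec n X Y w (Inr (edge n k))"
  using assms by (simp add: vec_R)

lemma vecdiff_LR:
  assumes "3 \<le> n" "k < n" "cmod w = 1" "cmod X \<noteq> cmod Y"
  shows "vec n X Y w (Inl i) \<noteq> vec n X Y w (Inr (edge n k))"
proof
  assume "vec n X Y w (Inl i) = vec n X Y w (Inr (edge n k))"
  then have "X * w ^ i = Y * w ^ k" using assms by (simp add: vec_R)
  then have "cmod (X * w ^ i) = cmod (Y * w ^ k)" by simp
  then show False using assms by (simp add: norm_mult norm_power)
qed

lemma cmod_wj: "cmod (wj n j) = 1" by (simp add: wj_def)

definition inS :: "nat \<Rightarrow> nat + nat set \<Rightarrow> nat + nat set \<Rightarrow> real \<Rightarrow> bool" where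
  "inS n a b \<theta> \<longleftrightarrow> (\<exists>X Y w. eigdata n X Y w \<theta> \<and> vec n X Y w a \<noteq> vec n X Y w b)"

definition thp :: "nat \<Rightarrow> nat \<Rightarrow> real" where "thp n j = 3 - cj n j + sj n j"
definition thn :: "nat \<Rightarrow> nat \<Rightarrow> real" where "thn n j = 3 - cj n j - sj n j"

lemma twomodes:
  assumes n: "5 \<le> n" and g: "g \<noteq> 0" and HD: "\<And>x y. P x \<Longrightarrow> P y \<Longrightarrow> Dg g (x - y)"
    and p1: "P (thp n 1)" "P (thn n 1)" and pj: "P (thp n j)" "P (thn n j)" and cc: "cj n 1 \<noteq> cj n j"
  shows False
proof -
  have d1: "Dg g (2 * sj n 1)" using HD[OF p1] by (simp add: thp_def thn_def)
  have d2: "Dg g (2 * sj n j)" using HD[OF pj] by (simp add: thp_def thn_def)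
  have d3: "Dg g ((3 - cj n 1 + sj n 1) - (3 - cj n j + sj n j))" using HD[OF p1(1) pj(1)] by (simp add: thp_def)
  obtain \<mu> where mu: "\<mu> \<in> \<rat>" "cj n 1 = \<mu> * g" and g2: "g ^ 2 \<in> \<rat>" and sc: "sj n 1 / cj n 1 \<in> \<rat>"
    using lemA[OF g sj_sq sj_sq cc d1 d2 d3] by blast
  show False
    using finalA[OF n _ sj_sq mu g2 sc] by (simp add: cj_def)
qed

lemma anchor:
  assumes g: "g \<noteq> 0" and HD: "\<And>x y. P x \<Longrightarrow> P y \<Longrightarrow> Dg g (x - y)"
    and p1: "P (thp n 1)" "P (thn n 1)" and pq: "P q" and qQ: "q \<in> \<rat>"
    and c: "cj n 1 \<in> {-1/2, 0, 1/2}" and cq: "3 - cj n 1 - q \<noteq> 0"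
  shows False
proof -
  have d1: "Dg g (2 * sj n 1)" using HD[OF p1] by (simp add: thp_def thn_def)
  have d2: "Dg g (3 - cj n 1 + sj n 1 - q)" using HD[OF p1(1) pq] by (simp add: thp_def)
  have "\<forall>x\<in>{-1/2, 0, 1/2::real}. x \<in> \<rat>" by simp
  then have cQ: "cj n 1 \<in> \<rat>" using c by blast
  have "sj n 1 \<in> \<rat>" using lemC[OF g _ cQ qQ cq d1 d2] sj_pos[of n 1] by simp
  then show False using finalC[OF sj_sq c] by simp
qed

lemma th_pm: "\<theta> = thp n j \<or> \<theta> = thn n j \<Longrightarrow> \<theta> = 3 - cj n j + sj n j \<or> \<theta> = 3 - cj n j - sj n j"
  by (auto simp: thp_def thn_def)

lemma full_LL:
  assumes n: "3 \<le> n" and c: "cj n j \<noteq> -1" and ne: "wj n j ^ i \<noteq> wj n j ^ k"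
    and th: "\<theta> = thp n j \<or> \<theta> = thn n j"
  shows "inS n (Inl i) (Inl k) \<theta>"
  unfolding inS_def
  using mode_eigdata[of n \<theta> j] th_pm[OF th] n vecdiff_LL[OF X_ne0[OF c] ne] by auto

lemma full_RR:
  assumes n: "3 \<le> n" and i: "i < n" and k: "k < n" and c: "cj n j \<noteq> -1" and ne: "wj n j ^ i \<noteq> wj n j ^ k"
    and th: "\<theta> = thp n j \<or> \<theta> = thn n j"
  shows "inS n (Inr (edge n i)) (Inr (edge n k)) \<theta>"
proof -
  have "2 - \<theta> \<noteq> 0" using Y_ne0[OF c th_pm[OF th]] .
  then have Y0: "complex_of_real (2 - \<theta>) \<noteq> 0" by (simp only: of_real_eq_0_iff not_False_eq_True)
  have e: "eigdata n (1 + cnj (wj n j)) (of_real (2 - \<theta>)) (wj n j) \<theta>"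
    using mode_eigdata[of n \<theta> j] th_pm[OF th] n by auto
  show ?thesis unfolding inS_def
    using e vecdiff_RR[OF n i k Y0 ne, of "1 + cnj (wj n j)"] by blast
qed

lemma full_LR:
  assumes n: "3 \<le> n" and k: "k < n" and c1: "cj n j \<noteq> 1" and c2: "cj n j \<noteq> -1"
    and th: "\<theta> = thp n j \<or> \<theta> = thn n j"
  shows "inS n (Inl i) (Inr (edge n k)) \<theta>" "inS n (Inr (edge n k)) (Inl i) \<theta>"
proof -
  have e: "eigdata n (1 + cnj (wj n j)) (of_real (2 - \<theta>)) (wj n j) \<theta>"
    using mode_eigdata[of n \<theta> j] th_pm[OF th] n by auto
  have d: "vec n (1 + cnj (wj n j)) (of_real (2 - \<theta>)) (wj n j) (Inl i) \<noteq>
           vec n (1 + cnj (wj n j)) (of_real (2 - \<theta>)) (wj n j) (Inr (edge n k))"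
    by (rule vecdiff_LR[OF n k cmod_wj XY_norm[OF c1 c2 th_pm[OF th]]])
  show "inS n (Inl i) (Inr (edge n k)) \<theta>" unfolding inS_def using e d by blast
  show "inS n (Inr (edge n k)) (Inl i) \<theta>" unfolding inS_def using e d[symmetric] by blast
qed

lemma cj_range:
  assumes "0 < j" "2 * j < n"
  shows "cj n j < 1" "-1 < cj n j"
proof -
  have n: "0 < n" using assms by simp
  have p0: "0 < 2 * pi * real j / real n" using assms by simp
  have p1: "2 * pi * real j / real n < pi"
  proof -
    have "2 * real j < real n" using assms(2) by linarith
    then have "2 * real j / real n < 1" using n by simp
    then have "pi * (2 * real j / real n) < pi * 1" by (intro mult_strict_left_mono) auto
    then show ?thesis by (simp add: mult_ac)
  qed
  show "cj n j < 1" unfolding cj_def using cos_monotone_0_pi[of 0 "2 * pi * real j / real n"] p0 p1 by simp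
  show "-1 < cj n j" unfolding cj_def using cos_monotone_0_pi[of "2 * pi * real j / real n" pi] p0 p1 by simp
qed

lemma cj_inj:
  assumes "0 < j" "2 * j < n" "0 < j'" "2 * j' < n" "cj n j = cj n j'"
  shows "j = j'"
proof -
  have n: "0 < n" using assms by simp
  have b: "0 \<le> 2 * pi * real x / real n" "2 * pi * real x / real n \<le> pi" if "2 * x < n" for x
  proof -
    show "0 \<le> 2 * pi * real x / real n" by simp
    have "2 * real x \<le> real n" using that by linarith
    then have "2 * real x / real n \<le> 1" using n by simp
    then have "pi * (2 * real x / real n) \<le> pi * 1" by (intro mult_left_mono) auto
    then show "2 * pi * real x / real n \<le> pi" by (simp add: mult_ac)
  qed
  have "2 * pi * real j / real n = 2 * pi * real j' / real n"
    using cos_inj_pi[OF b(1)[OF assms(2)] b(2)[OF assms(2)] b(1)[OF assms(4)] b(2)[OF assms(4)]] assms(5)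
    by (simp add: cj_def)
  then show ?thesis using n by simp
qed

lemma cj_vals: "cj 3 1 = -1/2" "cj 4 1 = 0" "cj 6 1 = 1/2"
proof -
  have "cos (2 * pi / 3) = - cos (pi - 2 * pi / 3)" by (simp only: cos_pi_minus minus_minus)
  also have "pi - 2 * pi / 3 = pi / 3" by simp
  finally show "cj 3 1 = -1/2" by (simp add: cj_def cos_60)
  show "cj 4 1 = 0" by (simp add: cj_def)
  have "2 * pi / 6 = pi / 3" by simp
  then show "cj 6 1 = 1/2" by (simp add: cj_def cos_60)
qed

lemma int_half:
  fixes i k :: nat and m :: int
  assumes "i < n" "k < n" "i \<noteq> k" "2 * (int i - int k) = m * int n"
  shows "int n = 2 * \<bar>int i - int k\<bar>"
proof -
  have n0: "0 < n" using assms by simp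
  have a: "\<bar>m\<bar> * int n = 2 * \<bar>int i - int k\<bar>" using assms(4) by (metis abs_mult abs_of_nat abs_numeral)
  have "\<bar>int i - int k\<bar> < int n" using assms by linarith
  then have "2 * \<bar>int i - int k\<bar> < 2 * int n" by simp
  then have "\<bar>m\<bar> * int n < 2 * int n" by (simp only: a)
  then have "\<bar>m\<bar> < 2" using n0 by (simp add: mult_less_cancel_right)
  moreover have "m \<noteq> 0" using assms by auto
  ultimately have "\<bar>m\<bar> = 1" by linarith
  then show ?thesis using a by simp
qed

lemma int_three:
  fixes d m :: int
  assumes "n = 2 * \<bar>d\<bar>" "d \<noteq> 0" "3 * d = m * n"
  shows False
proof -
  have "3 * \<bar>d\<bar> = \<bar>3 * d\<bar>" by (simp add: abs_mult)
  also have "\<dots> = \<bar>m\<bar> * \<bar>n\<bar>" using assms(3) by (simp add: abs_mult)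
  also have "\<dots> = (2 * \<bar>m\<bar>) * \<bar>d\<bar>" using assms(1) by (simp add: abs_mult)
  finally have "3 * \<bar>d\<bar> = (2 * \<bar>m\<bar>) * \<bar>d\<bar>" .
  then have "3 = 2 * \<bar>m\<bar>" using assms(2) by simp
  then show False by presburger
qed

lemma neg1_pow_ne: "odd (int i - int k) \<Longrightarrow> (-1::complex) ^ i \<noteq> (-1) ^ k"
proof -
  assume o: "odd (int i - int k)"
  then have "even i \<noteq> even k" by auto
  then show ?thesis by (cases "even i") auto
qed

lemma core_mixed:
  assumes n: "3 \<le> n" and g: "g \<noteq> 0" and HD: "\<And>x y. inS n a b x \<Longrightarrow> inS n a b y \<Longrightarrow> Dg g (x - y)"
    and k: "k < n" and ab: "(a = Inl i \<and> b = Inr (edge n k)) \<or> (a = Inr (edge n k) \<and> b = Inl i)"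
  shows False
proof -
  have full: "inS n a b (thp n j) \<and> inS n a b (thn n j)" if "0 < j" "2 * j < n" for j
    using ab full_LR[OF n k, of j _ i] cj_range[OF that] by auto
  have f1: "inS n a b (thp n 1)" "inS n a b (thn n 1)" using full[of 1] n by auto
  have a4: "inS n a b 4"
  proof -
    have "vec n 1 (-1) 1 a \<noteq> vec n 1 (-1) 1 b" using ab n k by (auto simp: vec_R)
    then show ?thesis unfolding inS_def using mode0_eigdata[of n] n by auto
  qed
  consider "n = 3" | "n = 4" | "5 \<le> n" using n by linarith
  then show False
  proof cases
    case 1
    have c: "cj n 1 = -1/2" using cj_vals 1 by simp
    show False by (rule anchor[OF g HD f1 a4]) (unfold c, simp_all)
  next
    case 2
    have c: "cj n 1 = 0" using cj_vals 2 by simp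
    show False by (rule anchor[OF g HD f1 a4]) (unfold c, simp_all)
  next
    case 3
    have f2: "inS n a b (thp n 2)" "inS n a b (thn n 2)" using full[of 2] 3 by auto
    have "cj n 1 \<noteq> cj n 2" using cj_inj[of 1 n 2] 3 by auto
    then show False using twomodes[OF 3 g HD f1 f2] by simp
  qed
qed

lemma core_same:
  fixes q g :: real and P :: "real \<Rightarrow> bool"
  assumes n: "3 \<le> n" and g: "g \<noteq> 0" and HD: "\<And>x y. P x \<Longrightarrow> P y \<Longrightarrow> Dg g (x - y)"
    and i: "i < n" and k: "k < n" and ik: "i \<noteq> k" and n3: "n \<noteq> 3"
    and n4: "\<not> (n = 4 \<and> (i = k + 2 \<or> k = i + 2))"
    and full: "\<And>j \<theta>. cj n j \<noteq> -1 \<Longrightarrow> wj n j ^ i \<noteq> wj n j ^ k \<Longrightarrow> \<theta> = thp n j \<or> \<theta> = thn n j \<Longrightarrow> P \<theta>"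
    and anc: "even n \<Longrightarrow> odd (int i - int k) \<Longrightarrow> P q"
    and q: "q \<in> {2, 6}"
  shows False
proof -
  have w1: "wj n 1 ^ i \<noteq> wj n 1 ^ k" using w1_inj[of n i k] i k ik by auto
  have c1: "cj n 1 \<noteq> -1" using cj_range[of 1 n] n by auto
  have f1: "P (thp n 1)" "P (thn n 1)" using full[OF c1 w1] by auto
  have qQ: "q \<in> \<rat>" using q by auto
  consider "n = 4" | "5 \<le> n" using n n3 by linarith
  then show False
  proof cases
    case 1
    have "odd (int i - int k)" using i k ik n4 1 by presburger
    then have pq: "P q" using anc 1 by simp
    have c: "cj n 1 = 0" using cj_vals 1 by simp
    show False by (rule anchor[OF g HD f1 pq qQ]) (use q in \<open>unfold c, auto\<close>)
  next
    case 2
    show False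
    proof (cases "wj n 2 ^ i = wj n 2 ^ k")
      case False
      have c2: "cj n 2 \<noteq> -1" using cj_range[of 2 n] 2 by auto
      have f2: "P (thp n 2)" "P (thn n 2)" using full[OF c2 False] by auto
      have "cj n 1 \<noteq> cj n 2" using cj_inj[of 1 n 2] 2 by auto
      then show False using twomodes[OF 2 g HD f1 f2] by simp
    next
      case True
      obtain m :: int where m: "int 2 * (int i - int k) = m * int n" using wj_pow_eq[OF _ True] n by auto
      have m2: "2 * (int i - int k) = m * int n" using m by simp
      have nh: "int n = 2 * \<bar>int i - int k\<bar>" by (rule int_half[OF i k ik m2])
      then have ev: "even n" by presburger
      show False
      proof (cases "n = 6")
        case True
        have "odd (int i - int k)" using nh True by presburger
        then have pq: "P q" using anc ev by simp
        have c: "cj n 1 = 1/2" using cj_vals True by simp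
        show False by (rule anchor[OF g HD f1 pq qQ]) (use q in \<open>unfold c, auto\<close>)
      next
        case False
        then have n8: "8 \<le> n" using 2 ev by presburger
        have w3: "wj n 3 ^ i \<noteq> wj n 3 ^ k"
        proof
          assume "wj n 3 ^ i = wj n 3 ^ k"
          then obtain m' :: int where m': "int 3 * (int i - int k) = m' * int n" using wj_pow_eq[of n 3 i k] n by auto
          have m3: "3 * (int i - int k) = m' * int n" using m' by simp
          have "int i - int k \<noteq> 0" using ik by simp
          then show False using int_three[OF nh _ m3] by simp
        qed
        have c3: "cj n 3 \<noteq> -1" using cj_range[of 3 n] n8 by auto
        have f3: "P (thp n 3)" "P (thn n 3)" using full[OF c3 w3] by auto
        have "cj n 1 \<noteq> cj n 3" using cj_inj[of 1 n 3] n8 by auto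
        then show False using twomodes[OF 2 g HD f1 f3] by simp
      qed
    qed
  qed
qed

lemma core_LL:
  assumes n: "3 \<le> n" and g: "g \<noteq> 0" and HD: "\<And>x y. inS n (Inl i) (Inl k) x \<Longrightarrow> inS n (Inl i) (Inl k) y \<Longrightarrow> Dg g (x - y)"
    and i: "i < n" and k: "k < n" and ik: "i \<noteq> k" and n3: "n \<noteq> 3"
    and n4: "\<not> (n = 4 \<and> (i = k + 2 \<or> k = i + 2))"
  shows False
proof (rule core_same[OF n g HD i k ik n3 n4, where q=2])
  show "inS n (Inl i) (Inl k) \<theta>" if "cj n j \<noteq> -1" "wj n j ^ i \<noteq> wj n j ^ k" "\<theta> = thp n j \<or> \<theta> = thn n j" for j \<theta>
    using full_LL[OF n that] .
  show "inS n (Inl i) (Inl k) 2" if "even n" "odd (int i - int k)"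
  proof -
    have d: "vec n 1 0 (-1) (Inl i) \<noteq> vec n 1 0 (-1) (Inl k)" using neg1_pow_ne[OF that(2)] by simp
    have e: "eigdata n 1 0 (-1) 2" using modeh2_eigdata[OF that(1)] n by simp
    show ?thesis unfolding inS_def using e d by blast
  qed
  show "(2::real) \<in> {2, 6}" by simp
qed

lemma core_RR:
  assumes n: "3 \<le> n" and g: "g \<noteq> 0"
    and HD: "\<And>x y. inS n (Inr (edge n i)) (Inr (edge n k)) x \<Longrightarrow> inS n (Inr (edge n i)) (Inr (edge n k)) y \<Longrightarrow> Dg g (x - y)"
    and i: "i < n" and k: "k < n" and ik: "i \<noteq> k" and n3: "n \<noteq> 3"
    and n4: "\<not> (n = 4 \<and> (i = k + 2 \<or> k = i + 2))"
  shows False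
proof (rule core_same[OF n g HD i k ik n3 n4, where q=6])
  show "inS n (Inr (edge n i)) (Inr (edge n k)) \<theta>" if "cj n j \<noteq> -1" "wj n j ^ i \<noteq> wj n j ^ k" "\<theta> = thp n j \<or> \<theta> = thn n j" for j \<theta>
    using full_RR[OF n i k that] .
  show "inS n (Inr (edge n i)) (Inr (edge n k)) 6" if "even n" "odd (int i - int k)"
  proof -
    have "vec n 0 1 (-1) (Inr (edge n i)) \<noteq> vec n 0 1 (-1) (Inr (edge n k))"
      using neg1_pow_ne[OF that(2)] n i k by (simp add: vec_R)
    moreover have e: "eigdata n 0 1 (-1) 6" using modeh6_eigdata[OF that(1)] n by simp
    ultimately show ?thesis unfolding inS_def by blast
  qed
  show "(6::real) \<in> {2, 6}" by simp
qed

lemma eps_cases: "(e::complex) ^ 2 = 1 \<Longrightarrow> e = 1 \<or> e = -1"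
proof -
  assume "e ^ 2 = 1"
  then have "(e - 1) * (e + 1) = 0" by (simp add: algebra_simps power2_eq_square)
  then show ?thesis by (simp add: eq_neg_iff_add_eq_0)
qed

lemma w3_val: "wj 3 1 = Complex (-1/2) (sqrt 3 / 2)"
proof -
  have a: "2 * pi * real 1 / real 3 = pi - pi / 3" by simp
  have "cos (pi - pi / 3) = - 1/2" unfolding cos_pi_minus cos_60 by simp
  moreover have "sin (pi - pi / 3) = sqrt 3 / 2" unfolding sin_pi_minus sin_60 by simp
  ultimately show ?thesis unfolding wj_def a by (simp only: complex_eq_iff cis.sel complex.sel)
qed

lemma w3_pows: "wj 3 1 ^ 0 = 1" "wj 3 1 ^ 1 = Complex (-1/2) (sqrt 3 / 2)" "wj 3 1 ^ 2 = Complex (-1/2) (- sqrt 3 / 2)"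
  unfolding w3_val by (simp_all add: power2_eq_square complex_eq_iff)

lemma pairs3: "i < 3 \<Longrightarrow> k < 3 \<Longrightarrow> i \<noteq> k \<Longrightarrow>
   (i = 0 \<and> k = 1) \<or> (i = 1 \<and> k = 0) \<or> (i = 0 \<and> k = 2) \<or> (i = 2 \<and> k = 0) \<or> (i = 1 \<and> k = 2) \<or> (i = (2::nat) \<and> k = 1)"
  by auto

lemma brute3_gen:
  fixes w :: complex
  assumes w: "w ^ 0 = 1" "w ^ 1 = Complex (-1/2) (sqrt 3 / 2)" "w ^ 2 = Complex (-1/2) (- sqrt 3 / 2)"
  assumes "i < 3" "k < 3" "l < 3" "m < 3" "i \<noteq> k" "l \<noteq> m" "e = 1 \<or> e = -1"
    and eq: "w ^ l - w ^ m = e * (w ^ i - w ^ k)"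
  shows "(l = i \<and> m = k) \<or> (l = k \<and> m = i)"
proof -
  have s3: "sqrt 3 \<noteq> (0::real)" by simp
  from pairs3[OF assms(4,5,8)] pairs3[OF assms(6,7,9)] assms(10) eq s3
  show ?thesis apply (elim disjE conjE) apply (simp_all only: w)
    apply (simp_all add: complex_eq_iff)
    done
qed

lemma brute3:
  assumes "i < 3" "k < 3" "l < 3" "m < 3" "i \<noteq> k" "l \<noteq> m" "e = 1 \<or> e = -1"
    and eq: "wj 3 1 ^ l - wj 3 1 ^ m = e * (wj 3 1 ^ i - wj 3 1 ^ k)"
  shows "(l = i \<and> m = k) \<or> (l = k \<and> m = i)"
  by (rule brute3_gen[OF w3_pows assms])

lemma brute4:
  assumes "i < 4" "k < 4" "l < 4" "m < 4" "i = k + 2 \<or> k = i + 2" "l \<noteq> m" "e = 1 \<or> e = -1"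
    and eq: "\<i> ^ l - \<i> ^ m = e * (\<i> ^ i - \<i> ^ k)"
  shows "(l = i \<and> m = k) \<or> (l = k \<and> m = i)"
proof -
  have v: "\<And>x. x < 4 \<Longrightarrow> x = 0 \<or> x = 1 \<or> x = 2 \<or> x = (3::nat)" by auto
  have p: "\<i> ^ 2 = -1" "\<i> ^ 3 = -\<i>" by (simp_all add: power2_eq_square power3_eq_cube)
  have ik: "(i = 0 \<and> k = 2) \<or> (i = 2 \<and> k = 0) \<or> (i = 1 \<and> k = 3) \<or> (i = 3 \<and> k = 1)" using assms(1,2,5) by auto
  from v[OF assms(3)] v[OF assms(4)] ik assms(7) assms(6) eq
  show ?thesis by (elim disjE conjE; simp add: p complex_eq_iff)
qed

lemma w4_val: "wj 4 1 = \<i>"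
proof -
  have "2 * pi * real 1 / real 4 = pi / 2" by simp
  then show ?thesis unfolding wj_def by simp
qed

lemma bruteN:
  assumes n: "n = 3 \<or> n = 4" and "i < n" "k < n" "l < n" "m < n" "i \<noteq> k" "l \<noteq> m"
    and dist: "n = 4 \<Longrightarrow> i = k + 2 \<or> k = i + 2" and e: "e = 1 \<or> e = -1"
    and eq: "wj n 1 ^ l - wj n 1 ^ m = e * (wj n 1 ^ i - wj n 1 ^ k)"
  shows "(l = i \<and> m = k) \<or> (l = k \<and> m = i)"
proof (cases "n = 3")
  case True then show ?thesis using brute3[of i k l m e] assms by simp
next
  case False then have n4: "n = 4" using n by simp
  show ?thesis using brute4[of i k l m e] assms n4 w4_val by simp
qed

lemma contra1:
  fixes A B Yp Ym ep em :: complex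
  assumes "Yp * A = ep * B" "Ym * A = em * B" "B \<noteq> 0" "ep = 1 \<or> ep = -1" "em = 1 \<or> em = -1"
    "Yp \<noteq> Ym" "Yp \<noteq> - Ym"
  shows False
proof -
  have A: "A \<noteq> 0" using assms(1,3,4) by auto
  from assms(4,5) consider "ep = em" | "ep = - em" by auto
  then show False
  proof cases
    case 1 then have "(Yp - Ym) * A = 0" using assms(1,2) by (simp add: algebra_simps)
    then show False using A assms(6) by simp
  next
    case 2 then have "(Yp + Ym) * A = 0" using assms(1,2) by (simp add: algebra_simps)
    then show False using A assms(7) by (simp add: add_eq_0_iff)
  qed
qed

lemma contra2:
  fixes A B X Yp Ym ep em :: complex
  assumes "A = ep * (Yp * B)" "A = em * (Ym * B)" "B \<noteq> 0" "ep = 1 \<or> ep = -1" "em = 1 \<or> em = -1"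
    "Yp \<noteq> Ym" "Yp \<noteq> - Ym"
  shows False
proof -
  have "ep * (Yp * B) = em * (Ym * B)" using assms(1,2) by (rule trans[OF sym])
  then have "(ep * Yp - em * Ym) * B = 0" by (simp add: algebra_simps)
  then have "ep * Yp - em * Ym = 0" using assms(3) by simp
  then have "ep * Yp = em * Ym" by simp
  then show False using assms(4-7) by auto
qed

lemma special:
  assumes n: "n = 3 \<or> n = 4" and i: "i < n" and k: "k < n" and ik: "i \<noteq> k"
    and dist: "n = 4 \<Longrightarrow> i = k + 2 \<or> k = i + 2"
    and ab: "(a = Inl i \<and> b = Inl k) \<or> (a = Inr (edge n i) \<and> b = Inr (edge n k))"
    and cV: "c \<in> VV n" and dV: "d \<in> VV n" and cd: "c \<noteq> d"
    and KEY: "\<And>X Y w \<theta>. eigdata n X Y w \<theta> \<Longrightarrow> \<exists>e. (e = 1 \<or> e = -1) \<and>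
        vec n X Y w c - vec n X Y w d = e * (vec n X Y w a - vec n X Y w b)"
  shows "{a, b} = {c, d}"
proof -
  have n3: "3 \<le> n" using n by auto
  have n0: "0 < n" using n by auto
  obtain e0 where "vec n 1 (-1) 1 c - vec n 1 (-1) 1 d = e0 * (vec n 1 (-1) 1 a - vec n 1 (-1) 1 b)"
    using KEY[OF mode0_eigdata[OF n0]] by blast
  moreover have "vec n 1 (-1) 1 a - vec n 1 (-1) 1 b = 0" using ab n3 i k by (auto simp: vec_R)
  ultimately have z: "vec n 1 (-1) 1 c = vec n 1 (-1) 1 d" by simp
  have cd_cases: "(\<exists>l m. l < n \<and> m < n \<and> l \<noteq> m \<and> c = Inl l \<and> d = Inl m) \<or>
                  (\<exists>l m. l < n \<and> m < n \<and> l \<noteq> m \<and> c = Inr (edge n l) \<and> d = Inr (edge n m))"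
  proof -
    from cV show ?thesis
    proof (cases rule: VV_cases)
      case (L l)
      from dV show ?thesis
      proof (cases rule: VV_cases)
        case (L m) then show ?thesis using \<open>c = Inl l\<close> \<open>l < n\<close> cd by auto
      next
        case (R m) then show ?thesis using \<open>c = Inl l\<close> z n3 by (simp add: vec_R)
      qed
    next
      case (R l)
      from dV show ?thesis
      proof (cases rule: VV_cases)
        case (L m) then show ?thesis using \<open>c = Inr (edge n l)\<close> \<open>l < n\<close> z n3 by (simp add: vec_R)
      next
        case (R m) then show ?thesis using \<open>c = Inr (edge n l)\<close> \<open>l < n\<close> cd by auto
      qed
    qed
  qed
  define W where "W = wj n 1"
  define X where "X = 1 + cnj W"
  define Yp where "Yp = complex_of_real (2 - thp n 1)"
  define Ym where "Ym = complex_of_real (2 - thn n 1)"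
  have cr: "cj n 1 < 1" "-1 < cj n 1" using cj_range[of 1 n] n3 by auto
  have X0: "X \<noteq> 0" unfolding X_def W_def using X_ne0[of n 1] cr by auto
  have "2 - thp n 1 \<noteq> 0" using Y_ne0[of n 1 "thp n 1"] cr by (auto simp: thp_def)
  then have Yp0: "Yp \<noteq> 0" unfolding Yp_def by (simp only: of_real_eq_0_iff not_False_eq_True)
  have "2 - thn n 1 \<noteq> 0" using Y_ne0[of n 1 "thn n 1"] cr by (auto simp: thn_def)
  then have Ym0: "Ym \<noteq> 0" unfolding Ym_def by (simp only: of_real_eq_0_iff not_False_eq_True)
  have Ypm: "Yp \<noteq> Ym"
  proof
    assume "Yp = Ym"
    then have "2 - thp n 1 = 2 - thn n 1" unfolding Yp_def Ym_def by (simp only: of_real_eq_iff)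
    then show False using sj_pos[of n 1] by (simp add: thp_def thn_def)
  qed
  have Ypm': "Yp \<noteq> - Ym"
  proof
    assume "Yp = - Ym"
    then have "2 - thp n 1 = - (2 - thn n 1)" unfolding Yp_def Ym_def by (metis of_real_eq_iff of_real_minus)
    then show False using cr by (simp add: thp_def thn_def)
  qed
  have ep_ex: "eigdata n X Yp W (thp n 1)" unfolding X_def Yp_def W_def
    by (rule mode_eigdata[OF n0]) (simp add: thp_def)
  have em_ex: "eigdata n X Ym W (thn n 1)" unfolding X_def Ym_def W_def
    by (rule mode_eigdata[OF n0]) (simp add: thn_def)
  obtain ep where ep: "ep = 1 \<or> ep = -1" and epe: "vec n X Yp W c - vec n X Yp W d = ep * (vec n X Yp W a - vec n X Yp W b)"
    using KEY[OF ep_ex] by blast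
  obtain em where em: "em = 1 \<or> em = -1" and eme: "vec n X Ym W c - vec n X Ym W d = em * (vec n X Ym W a - vec n X Ym W b)"
    using KEY[OF em_ex] by blast
  have wik: "W ^ i \<noteq> W ^ k" unfolding W_def using w1_inj[OF n0 i k] ik by auto
  from cd_cases obtain l m where lm: "l < n" "m < n" "l \<noteq> m" and
    cdt: "(c = Inl l \<and> d = Inl m) \<or> (c = Inr (edge n l) \<and> d = Inr (edge n m))" by blast
  have fin: "{a, b} = {c, d}" if "W ^ l - W ^ m = e * (W ^ i - W ^ k)" "e = 1 \<or> e = -1"
    and same: "(a = Inl i \<and> b = Inl k \<and> c = Inl l \<and> d = Inl m) \<or>
               (a = Inr (edge n i) \<and> b = Inr (edge n k) \<and> c = Inr (edge n l) \<and> d = Inr (edge n m))" for e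
  proof -
    have "(l = i \<and> m = k) \<or> (l = k \<and> m = i)"
      using bruteN[OF n i k lm(1,2) ik lm(3) dist that(2)] that(1) unfolding W_def by blast
    then show ?thesis using same by auto
  qed
  have VL: "vec n X' Y' W (Inl x) - vec n X' Y' W (Inl y) = X' * (W ^ x - W ^ y)" for X' Y' x y
    by (simp only: vec_L right_diff_distrib)
  have VR: "vec n X' Y' W (Inr (edge n x)) - vec n X' Y' W (Inr (edge n y)) = Y' * (W ^ x - W ^ y)"
    if "x < n" "y < n" for X' Y' x y
    by (simp only: vec_R[OF n3 that(1)] vec_R[OF n3 that(2)] right_diff_distrib)
  from ab cdt show ?thesis
  proof (elim disjE conjE)
    assume a: "a = Inl i" "b = Inl k" and c: "c = Inl l" "d = Inl m"
    have "X * (W ^ l - W ^ m) = ep * (X * (W ^ i - W ^ k))" using epe unfolding a c VL .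
    also have "ep * (X * (W ^ i - W ^ k)) = X * (ep * (W ^ i - W ^ k))" by (rule mult.left_commute)
    finally have "X * (W ^ l - W ^ m) = X * (ep * (W ^ i - W ^ k))" .
    then have "W ^ l - W ^ m = ep * (W ^ i - W ^ k)" using X0 by (rule mult_left_cancel[THEN iffD1, rotated])
    then show ?thesis by (rule fin[OF _ ep disjI1[OF conjI[OF a(1) conjI[OF a(2) conjI[OF c(1) c(2)]]]]])
  next
    assume a: "a = Inl i" "b = Inl k" and c: "c = Inr (edge n l)" "d = Inr (edge n m)"
    have v1: "vec n X Yp W c - vec n X Yp W d = Yp * (W ^ l - W ^ m)" "vec n X Ym W c - vec n X Ym W d = Ym * (W ^ l - W ^ m)"
      by (simp_all only: c VR[OF lm(1,2)])
    have v2: "vec n X Yp W a - vec n X Yp W b = X * (W ^ i - W ^ k)" "vec n X Ym W a - vec n X Ym W b = X * (W ^ i - W ^ k)"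
      by (simp_all only: a VL)
    have h1: "Yp * (W ^ l - W ^ m) = ep * (X * (W ^ i - W ^ k))" using epe unfolding v1 v2 .
    have h2: "Ym * (W ^ l - W ^ m) = em * (X * (W ^ i - W ^ k))" using eme unfolding v1 v2 .
    have B0: "X * (W ^ i - W ^ k) \<noteq> 0" using X0 wik by simp
    have False by (rule contra1[OF h1 h2 B0 ep em Ypm Ypm'])
    then show ?thesis by (rule FalseE)
  next
    assume a: "a = Inr (edge n i)" "b = Inr (edge n k)" and c: "c = Inl l" "d = Inl m"
    have v1: "vec n X Yp W c - vec n X Yp W d = X * (W ^ l - W ^ m)" "vec n X Ym W c - vec n X Ym W d = X * (W ^ l - W ^ m)"
      by (simp_all only: c VL)
    have v2: "vec n X Yp W a - vec n X Yp W b = Yp * (W ^ i - W ^ k)" "vec n X Ym W a - vec n X Ym W b = Ym * (W ^ i - W ^ k)"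
      by (simp_all only: a VR[OF i k])
    have h1: "X * (W ^ l - W ^ m) = ep * (Yp * (W ^ i - W ^ k))" using epe unfolding v1 v2 .
    have h2: "X * (W ^ l - W ^ m) = em * (Ym * (W ^ i - W ^ k))" using eme unfolding v1 v2 .
    have B0: "W ^ i - W ^ k \<noteq> 0" using wik by simp
    have False by (rule contra2[OF h1 h2 B0 ep em Ypm Ypm'])
    then show ?thesis by (rule FalseE)
  next
    assume a: "a = Inr (edge n i)" "b = Inr (edge n k)" and c: "c = Inr (edge n l)" "d = Inr (edge n m)"
    have v1: "vec n X Yp W c - vec n X Yp W d = Yp * (W ^ l - W ^ m)"
      using VR[OF lm(1,2), of X Yp] c by simp
    have v2: "vec n X Yp W a - vec n X Yp W b = Yp * (W ^ i - W ^ k)"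
      using VR[OF i k, of X Yp] a by simp
    have "Yp * (W ^ l - W ^ m) = ep * (Yp * (W ^ i - W ^ k))" using epe unfolding v1 v2 .
    also have "ep * (Yp * (W ^ i - W ^ k)) = Yp * (ep * (W ^ i - W ^ k))" by (rule mult.left_commute)
    finally have "Yp * (W ^ l - W ^ m) = Yp * (ep * (W ^ i - W ^ k))" .
    then have "W ^ l - W ^ m = ep * (W ^ i - W ^ k)" using Yp0 by (rule mult_left_cancel[THEN iffD1, rotated])
    then show ?thesis by (rule fin[OF _ ep disjI2[OF conjI[OF a(1) conjI[OF a(2) conjI[OF c(1) c(2)]]]]])
  qed
qed

lemma dot_pair:
  assumes "finite V" "a \<in> V" "b \<in> V" "a \<noteq> b"
  shows "(\<Sum>x\<in>V. u x * pair_state a b x) = u a - u b"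
proof -
  have "(\<Sum>x\<in>V. u x * pair_state a b x) = (\<Sum>x\<in>V. (if x = a then u x else 0)) - (\<Sum>x\<in>V. (if x = b then u x else 0))"
  proof -
    have "u x * pair_state a b x = (if x = a then u x else 0) - (if x = b then u x else 0)" for x
      using assms(4) by (auto simp: pair_state_def char_vec_def)
    then show ?thesis by (simp add: sum_subtractf)
  qed
  also have "\<dots> = u a - u b" using assms by simp
  finally show ?thesis .
qed

lemma pair_real: "Im (pair_state a b x) = 0"
  by (simp add: pair_state_def char_vec_def)

lemma cis_sq_eq:
  assumes "cis (- (\<tau> * x)) ^ 2 = cis (- (\<tau> * y)) ^ 2"
  shows "\<exists>m::int. \<tau> * (x - y) = of_int m * pi"
proof -
  have "cis (- (2 * \<tau> * x)) = cis (- (2 * \<tau> * y))" using assms by (simp add: DeMoivre mult_ac)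
  then have "cis (- (2 * \<tau> * x)) * cis (2 * \<tau> * x) = cis (- (2 * \<tau> * y)) * cis (2 * \<tau> * x)" by simp
  then have "cis (2 * \<tau> * (x - y)) = 1" by (simp add: cis_mult algebra_simps)
  then have "Re (cis (2 * \<tau> * (x - y))) = Re 1" by (rule arg_cong)
  then have "cos (2 * \<tau> * (x - y)) = 1" by (simp only: cis.sel one_complex.sel)
  then obtain m :: int where "2 * \<tau> * (x - y) = of_int m * 2 * pi" using cos_one_2pi_int by blast
  then have "\<tau> * (x - y) = of_int m * pi" by simp
  then show ?thesis by blast
qed

theorem corollary3p3:
  fixes n :: nat
  assumes "n \<ge> 3"
  shows "\<not> (\<exists>a b c d.
            a \<in> Q_verts {0..<n} (cycle_adj n) \<and> b \<in> Q_verts {0..<n} (cycle_adj n) \<and>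
            c \<in> Q_verts {0..<n} (cycle_adj n) \<and> d \<in> Q_verts {0..<n} (cycle_adj n) \<and>
            a \<noteq> b \<and> c \<noteq> d \<and> {a, b} \<noteq> {c, d} \<and>
            lap_pair_PST (Q_verts {0..<n} (cycle_adj n)) Q_adj a b c d)"
proof
  assume "\<exists>a b c d.
            a \<in> Q_verts {0..<n} (cycle_adj n) \<and> b \<in> Q_verts {0..<n} (cycle_adj n) \<and>
            c \<in> Q_verts {0..<n} (cycle_adj n) \<and> d \<in> Q_verts {0..<n} (cycle_adj n) \<and>
            a \<noteq> b \<and> c \<noteq> d \<and> {a, b} \<noteq> {c, d} \<and>
            lap_pair_PST (Q_verts {0..<n} (cycle_adj n)) Q_adj a b c d"
  then obtain a b c d where aV: "a \<in> VV n" and bV: "b \<in> VV n" and cV: "c \<in> VV n" and dV: "d \<in> VV n"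
    and ab: "a \<noteq> b" and cd: "c \<noteq> d" and ne: "{a, b} \<noteq> {c, d}"
    and P: "lap_pair_PST (VV n) Q_adj a b c d"
    unfolding VV_def by blast
  have n3: "3 \<le> n" using assms by simp
  define L where "L = laplacian (VV n) Q_adj"
  from P obtain \<tau> :: real and \<chi> :: complex where chi: "cmod \<chi> = 1"
    and pst: "\<And>x. x \<in> VV n \<Longrightarrow> exp_evolve (VV n) L \<tau> (pair_state a b) x = \<chi> * pair_state c d x"
    unfolding lap_pair_PST_def L_def by blast
  have symL: "\<And>x y. x \<in> VV n \<Longrightarrow> y \<in> VV n \<Longrightarrow> L x y = L y x" unfolding L_def by (rule lap_sym)
  have realL: "\<And>x y. x \<in> VV n \<Longrightarrow> y \<in> VV n \<Longrightarrow> Im (L x y) = 0" unfolding L_def by (rule lap_real)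
  have K: "vec n X Y w c - vec n X Y w d = cis (- (\<tau> * \<theta>)) / \<chi> * (vec n X Y w a - vec n X Y w b)
           \<and> (vec n X Y w a \<noteq> vec n X Y w b \<longrightarrow> cis (- (\<tau> * \<theta>)) ^ 2 = \<chi> ^ 2)"
    if ed: "eigdata n X Y w \<theta>" for X Y w \<theta>
  proof -
    have eig: "\<And>x. x \<in> VV n \<Longrightarrow> mat_vec (VV n) L (vec n X Y w) x = of_real \<theta> * vec n X Y w x"
      unfolding L_def using eigdata_eigen[OF n3 ed] by blast
    note ph = pst_phase[OF VV_finite symL realL eig pair_real pair_real chi pst]
    have d1: "(\<Sum>x\<in>VV n. vec n X Y w x * pair_state a b x) = vec n X Y w a - vec n X Y w b"
      by (rule dot_pair[OF VV_finite aV bV ab])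
    have d2: "(\<Sum>x\<in>VV n. vec n X Y w x * pair_state c d x) = vec n X Y w c - vec n X Y w d"
      by (rule dot_pair[OF VV_finite cV dV cd])
    show ?thesis using ph unfolding d1 d2 by auto
  qed
  show False
  proof (cases "\<tau> = 0")
    case True
    have e: "pair_state a b x = \<chi> * pair_state c d x" if "x \<in> VV n" for x
      using pst[OF that] True by (simp add: evolve_zero)
    have "\<chi> * pair_state c d a = 1" using e[OF aV] ab by (simp add: pair_state_def char_vec_def)
    then have "pair_state c d a \<noteq> 0" by auto
    then have ac: "a = c \<or> a = d" by (auto simp: pair_state_def char_vec_def split: if_splits)
    have "\<chi> * pair_state c d b = -1" using e[OF bV] ab by (simp add: pair_state_def char_vec_def)
    then have "pair_state c d b \<noteq> 0" by auto
    then have bc: "b = c \<or> b = d" by (auto simp: pair_state_def char_vec_def split: if_splits)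
    have "{a, b} = {c, d}" using ac bc ab cd by auto
    then show False using ne by simp
  next
    case False
    define g where "g = pi / \<tau>"
    have g0: "g \<noteq> 0" using False by (simp add: g_def)
    have HD: "Dg g (x - y)" if h1: "inS n a b x" and h2: "inS n a b y" for x y
    proof -
      obtain X1 Y1 w1 where e1: "eigdata n X1 Y1 w1 x" "vec n X1 Y1 w1 a \<noteq> vec n X1 Y1 w1 b"
        using h1 unfolding inS_def by blast
      obtain X2 Y2 w2 where e2: "eigdata n X2 Y2 w2 y" "vec n X2 Y2 w2 a \<noteq> vec n X2 Y2 w2 b"
        using h2 unfolding inS_def by blast
      have "cis (- (\<tau> * x)) ^ 2 = \<chi> ^ 2" using K[OF e1(1)] e1(2) by blast
      moreover have "cis (- (\<tau> * y)) ^ 2 = \<chi> ^ 2" using K[OF e2(1)] e2(2) by blast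
      ultimately obtain m :: int where "\<tau> * (x - y) = of_int m * pi" using cis_sq_eq by metis
      then have "x - y = of_int m * g" using False by (simp add: g_def field_simps)
      then show ?thesis unfolding Dg_def by blast
    qed
    have KEY: "\<exists>e. (e = 1 \<or> e = -1) \<and> vec n X Y w c - vec n X Y w d = e * (vec n X Y w a - vec n X Y w b)"
      if ed: "eigdata n X Y w \<theta>" for X Y w \<theta>
    proof (cases "vec n X Y w a = vec n X Y w b")
      case True
      then show ?thesis using K[OF ed] by auto
    next
      case False
      define \<rho> where "\<rho> = cis (- (\<tau> * \<theta>)) / \<chi>"
      have c0: "\<chi> \<noteq> 0" using chi by auto
      have "cis (- (\<tau> * \<theta>)) ^ 2 = \<chi> ^ 2" using K[OF ed] False by blast
      then have "\<rho> ^ 2 = 1" using c0 by (simp add: \<rho>_def power_divide)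
      then have "\<rho> = 1 \<or> \<rho> = -1" by (rule eps_cases)
      then show ?thesis using K[OF ed] unfolding \<rho>_def[symmetric] by blast
    qed
    from aV show False
    proof (cases rule: VV_cases)
      case (L i)
      from bV show False
      proof (cases rule: VV_cases)
        case (L k)
        have ik: "i \<noteq> k" using ab \<open>a = Inl i\<close> \<open>b = Inl k\<close> by auto
        show False
        proof (cases "n = 3 \<or> (n = 4 \<and> (i = k + 2 \<or> k = i + 2))")
          case True
          then have nn: "n = 3 \<or> n = 4" by auto
          have "{a, b} = {c, d}"
            by (rule special[OF nn \<open>i < n\<close> \<open>k < n\<close> ik _ _ cV dV cd KEY])
               (use True \<open>a = Inl i\<close> \<open>b = Inl k\<close> in auto)
          then show False using ne by simp
        next
          case False
          show False
            by (rule core_LL[OF n3 g0 _ \<open>i < n\<close> \<open>k < n\<close> ik])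
               (use HD \<open>a = Inl i\<close> \<open>b = Inl k\<close> False in auto)
        qed
      next
        case (R k)
        show False
          by (rule core_mixed[OF n3 g0 _ \<open>k < n\<close>, of a b i]) (use HD L R in auto)
      qed
    next
      case (R i)
      from bV show False
      proof (cases rule: VV_cases)
        case (L k)
        show False
          by (rule core_mixed[OF n3 g0 _ \<open>i < n\<close>, of a b k]) (use HD L R in auto)
      next
        case (R k)
        have ik: "i \<noteq> k" using ab \<open>a = Inr (edge n i)\<close> \<open>b = Inr (edge n k)\<close> by auto
        show False
        proof (cases "n = 3 \<or> (n = 4 \<and> (i = k + 2 \<or> k = i + 2))")
          case True
          then have nn: "n = 3 \<or> n = 4" by auto
          have "{a, b} = {c, d}"
            by (rule special[OF nn \<open>i < n\<close> \<open>k < n\<close> ik _ _ cV dV cd KEY])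
               (use True \<open>a = Inr (edge n i)\<close> \<open>b = Inr (edge n k)\<close> in auto)
          then show False using ne by simp
        next
          case False
          show False
            by (rule core_RR[OF n3 g0 _ \<open>i < n\<close> \<open>k < n\<close> ik])
               (use HD \<open>a = Inr (edge n i)\<close> \<open>b = Inr (edge n k)\<close> False in auto)
        qed
      qed
    qed
  qed
qed

end
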